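(* Let $k>0$ and let $T:(\mathbb{C}^{n\times n})^{\otimes k}\to\mathbb{C}$ be a $GL$-invariant linear map. For each object $W$ of $\mathrm{St}\mathbb{C}^n$ define $\mathbf{Cf}_T(W):\mathcal{C}hart(W)\to\Omega^k_{\mathrm{hol}}(W)$ on $m$-simplices by sending $(\rho_0,\ldots,\rho_m)$ to the labeling of the cells of $\Delta^m$ in which every cell of dimension $\neq k$ is labeled $0$ and every $k$-cell $(i_0<\cdots<i_k)$ is labeled by $\tau_T(\rho_{i_0},\ldots,\rho_{i_k})\in\Omega^k_{\mathrm{hol}}(W)$ (in particular, for $m<k$ all labels are $0$). Then these labelings are $m$-simplices of $\Omega^k_{\mathrm{hol}}(W)$, each $\mathbf{Cf}_T(W)$ is a map of simplicial sets, and $\mathbf{Cf}_T:\mathcal{C}hart\to\Omega^k_{\mathrm{hol}}$ is a map of $\infty$-prestacks (natural in $W$).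
   Context: $\mathrm{St}\mathbb{C}^n$ is the category whose objects are $n$-dimensional Stein manifolds biholomorphic to an open subset of $\mathbb{C}^n$, and whose morphisms are holomorphic embeddings (biholomorphisms onto an open image); an $\infty$-prestack is a functor $(\mathrm{St}\mathbb{C}^n)^{op}\to\mathrm{sSet}$. $\mathcal{C}hart(W)$ is the $0$-coskeletal simplicial set whose $m$-simplices are $(m+1)$-tuples $(\rho_0,\ldots,\rho_m)$ of biholomorphisms $\rho_j:W\to V_j$ onto open subsets $V_j\subset\mathbb{C}^n$; along $\phi:W'\to W$ it restricts by $\rho\mapsto\rho\circ\phi$ (with codomain restricted to the image). $\Omega^k_{\mathrm{hol}}(W):=DK(\Omega^k_{\mathrm{hol}}(W)[-k])$, whose $m$-simplices are labelings of the $k$-cells of $\Delta^m$ by holomorphic $k$-forms on $W$ (all other cells labeled $0$) such that the alternating sum of the labels of the faces of each $(k+1)$-cell vanishes; faces restrict labelings, degeneracies pull back labelings along codegeneracies with labels of cells having a repeated index set to $0$; restriction along $\phi$ is pullback of forms. A linear map $T:(\mathbb{C}^{n\times n})^{\otimes k}\to\mathbb{C}$ is $GL$-invariant if $T(A^{-1}M_1A,\ldots,A^{-1}M_kA)=T(M_1,\ldots,M_k)$ for all $A\in GL_n(\mathbb{C})$. It is extended to matrix-valued $1$-forms by $T[\alpha_1\otimes M_1,\ldots,\alpha_k\otimes M_k]:=\alpha_1\wedge\cdots\wedge\alpha_k\cdot T(M_1,\ldots,M_k)$ and multilinearity. For a biholomorphism $\varphi$ between open subsets of $\mathbb{C}^n$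 with Jacobian matrix $\dot\varphi$, set $\theta(\varphi):=\dot\varphi^{-1}\,d\dot\varphi$ (a matrix-valued $1$-form on the source of $\varphi$) and $\varphi^\sharp(\alpha\otimes M)(x):=(\varphi^*\alpha)(x)\otimes \dot\varphi(x)^{-1}M\dot\varphi(x)$. For a tuple of charts $(\sigma_0,\ldots,\sigma_k)$, $\sigma_j:W\to V_j$, put $\phi_{p,q}:=\sigma_p\circ\sigma_q^{-1}:V_q\to V_p$, $\theta_r:=\phi_{r,k}^\sharp\big(\theta(\phi_{r-1,r})\big)$ (a matrix-valued $1$-form on $V_k$) for $r=1,\ldots,k$, and $\tau_T(\sigma_0,\ldots,\sigma_k):=\sigma_k^*\big(T[\theta_1,\ldots,\theta_k]\big)$. *)

theory Defs
  imports "HOL-Analysis.Analysis" "HOL-Combinatorics.Permutations"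
begin

definition cvscale :: "complex \<Rightarrow> complex^'n \<Rightarrow> complex^'n" where
  "cvscale c v = (\<chi> j. c * v $ j)"

definition cmscale :: "complex \<Rightarrow> complex^'n^'n \<Rightarrow> complex^'n^'n" where
  "cmscale c M = (\<chi> i j. c * M $ i $ j)"

definition hol_fun :: "(complex^'n) set \<Rightarrow> (complex^'n \<Rightarrow> complex) \<Rightarrow> bool" where
  "hol_fun U f \<longleftrightarrow> (\<forall>x\<in>U. \<exists>D. (f has_derivative D) (at x) \<and>
                        (\<forall>v. D (cvscale \<i> v) = \<i> * D v))"

definition hol_map :: "(complex^'n) set \<Rightarrow> (complex^'n \<Rightarrow> complex^'m) \<Rightarrow> bool" where
  "hol_map U F \<longleftrightarrow> (\<forall>i. hol_fun U (\<lambda>x. F x $ i))"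

definition biholo :: "(complex^'n) set \<Rightarrow> (complex^'n \<Rightarrow> complex^'n) \<Rightarrow> bool" where
  "biholo U F \<longleftrightarrow> open U \<and> hol_map U F \<and> inj_on F U \<and> open (F ` U)
                   \<and> hol_map (F ` U) (inv_into U F)"

text \<open>Objects of St C^n, represented by an open subset of C^n (biholomorphic model):
  Stein = holomorphically convex open subset (Cartan--Thullen).\<close>
definition hol_hull :: "(complex^'n) set \<Rightarrow> (complex^'n) set \<Rightarrow> (complex^'n) set" where
  "hol_hull U K = {z\<in>U. \<forall>f. hol_fun U f \<longrightarrow> norm (f z) \<le> (SUP w\<in>K. norm (f w))}"

definition stein_open :: "(complex^'n) set \<Rightarrow> bool" where
  "stein_open U \<longleftrightarrow> open U \<and>
     (\<forall>K. compact K \<and> K \<noteq> {} \<and> K \<subseteq> U \<longrightarrow> compact (hol_hull U K))"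

definition chart :: "(complex^'n) set \<Rightarrow> (complex^'n \<Rightarrow> complex^'n) \<Rightarrow> bool" where
  "chart U \<rho> \<longleftrightarrow> biholo U \<rho>"

text \<open>Morphisms U' \<rightarrow> U of St C^n: holomorphic embeddings (biholomorphic onto open image).\<close>
definition hol_embed :: "(complex^'n) set \<Rightarrow> (complex^'n) set \<Rightarrow> (complex^'n \<Rightarrow> complex^'n) \<Rightarrow> bool" where
  "hol_embed U' U \<phi> \<longleftrightarrow> biholo U' \<phi> \<and> \<phi> ` U' \<subseteq> U"

definition minv :: "complex^'n^'n \<Rightarrow> complex^'n^'n" where
  "minv A = (SOME B. A ** B = mat 1 \<and> B ** A = mat 1)"

definition jac :: "(complex^'n \<Rightarrow> complex^'n) \<Rightarrow> complex^'n \<Rightarrow> complex^'n^'n" where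
  "jac F x = (\<chi> i j. frechet_derivative (\<lambda>y. F y $ i) (at x) (axis j 1))"

definition dmat :: "(complex^'n \<Rightarrow> complex^'n^'n) \<Rightarrow> complex^'n \<Rightarrow> complex^'n \<Rightarrow> complex^'n^'n" where
  "dmat M x v = (\<chi> i j. frechet_derivative (\<lambda>y. M y $ i $ j) (at x) v)"

type_synonym 'n mform = "complex^'n \<Rightarrow> complex^'n \<Rightarrow> complex^'n^'n"

definition theta :: "(complex^'n \<Rightarrow> complex^'n) \<Rightarrow> 'n mform" where
  "theta \<phi> x v = minv (jac \<phi> x) ** dmat (jac \<phi>) x v"

definition sharp :: "(complex^'n \<Rightarrow> complex^'n) \<Rightarrow> 'n mform \<Rightarrow> 'n mform" where
  "sharp \<phi> \<Theta> x v = minv (jac \<phi> x) ** \<Theta> (\<phi> x) (jac \<phi> x *v v) ** jac \<phi> x"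

text \<open>Scalar k-forms: point \<Rightarrow> (list of tangent vectors, only first k used) \<Rightarrow> value.\<close>
type_synonym 'n kform = "complex^'n \<Rightarrow> (nat \<Rightarrow> complex^'n) \<Rightarrow> complex"

text \<open>T[Theta_1,...,Theta_k] with wedge convention
  (a_1 \<and> ... \<and> a_k)(v_0,...,v_(k-1)) = det (a_r(v_s)).\<close>
definition Twedge :: "((nat \<Rightarrow> complex^'n^'n) \<Rightarrow> complex) \<Rightarrow> nat \<Rightarrow> (nat \<Rightarrow> 'n mform) \<Rightarrow> 'n kform" where
  "Twedge T k \<Theta>s x v =
     (\<Sum>p | p permutes {..<k}. of_int (sign p) * T (\<lambda>r. \<Theta>s (Suc r) x (v (p r))))"

definition pullk :: "(complex^'n \<Rightarrow> complex^'n) \<Rightarrow> 'n kform \<Rightarrow> 'n kform" where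
  "pullk \<phi> \<omega> x v = \<omega> (\<phi> x) (\<lambda>i. jac \<phi> x *v v i)"

text \<open>tau_T(sigma_0,...,sigma_k) for charts of U given as a list of length k+1.\<close>
definition tau :: "((nat \<Rightarrow> complex^'n^'n) \<Rightarrow> complex) \<Rightarrow> nat \<Rightarrow> (complex^'n) set
                   \<Rightarrow> (complex^'n \<Rightarrow> complex^'n) list \<Rightarrow> 'n kform" where
  "tau T k U \<sigma>s =
    (let \<phi> = (\<lambda>p q. (\<sigma>s ! p) \<circ> inv_into U (\<sigma>s ! q));
         \<Theta>s = (\<lambda>r. sharp (\<phi> r k) (theta (\<phi> (r - 1) r)))
     in pullk (\<sigma>s ! k) (Twedge T k \<Theta>s))"

definition multilin :: "(complex \<Rightarrow> 'a::plus \<Rightarrow> 'a) \<Rightarrow> nat \<Rightarrow> ((nat \<Rightarrow> 'a) \<Rightarrow> complex) \<Rightarrow> bool" where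
  "multilin scl k F \<longleftrightarrow>
     (\<forall>r<k. \<forall>v a b. F (v(r := a + b)) = F (v(r := a)) + F (v(r := b))) \<and>
     (\<forall>r<k. \<forall>v a c. F (v(r := scl c a)) = c * F (v(r := a))) \<and>
     (\<forall>v w. (\<forall>r<k. v r = w r) \<longrightarrow> F v = F w)"

definition gl_invariant :: "nat \<Rightarrow> ((nat \<Rightarrow> complex^'n^'n) \<Rightarrow> complex) \<Rightarrow> bool" where
  "gl_invariant k T \<longleftrightarrow>
     (\<forall>A M. invertible A \<longrightarrow> T (\<lambda>r. minv A ** M r ** A) = T M)"

definition alternating :: "nat \<Rightarrow> ((nat \<Rightarrow> 'a) \<Rightarrow> complex) \<Rightarrow> bool" where
  "alternating k F \<longleftrightarrow> (\<forall>v r s. r < k \<and> s < k \<and> r \<noteq> s \<and> v r = v s \<longrightarrow> F v = 0)"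

definition hol_kform :: "nat \<Rightarrow> (complex^'n) set \<Rightarrow> 'n kform \<Rightarrow> bool" where
  "hol_kform k U \<omega> \<longleftrightarrow>
     (\<forall>x\<in>U. multilin cvscale k (\<omega> x) \<and> alternating k (\<omega> x)) \<and>
     (\<forall>js. hol_fun U (\<lambda>x. \<omega> x (\<lambda>i. axis (js i) 1)))"

definition kcells :: "nat \<Rightarrow> nat \<Rightarrow> nat set set" where
  "kcells k m = {c. c \<subseteq> {0..m} \<and> card c = Suc k}"

definition chart_simplex :: "(complex^'n) set \<Rightarrow> nat \<Rightarrow> (nat \<Rightarrow> complex^'n \<Rightarrow> complex^'n) \<Rightarrow> bool" where
  "chart_simplex U m \<rho> \<longleftrightarrow> (\<forall>j\<le>m. chart U (\<rho> j))"

text \<open>m-simplices of Omega^k_hol(U): labelings of k-cells by holomorphic k-forms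
  (other cells labelled 0 implicitly) with vanishing alternating face sums on (k+1)-cells.\<close>
definition omega_simplex :: "nat \<Rightarrow> (complex^'n) set \<Rightarrow> nat \<Rightarrow> (nat set \<Rightarrow> 'n kform) \<Rightarrow> bool" where
  "omega_simplex k U m L \<longleftrightarrow>
     (\<forall>c\<in>kcells k m. hol_kform k U (L c)) \<and>
     (\<forall>d\<in>kcells (Suc k) m. \<forall>x\<in>U. \<forall>v.
        (\<Sum>j<Suc (Suc k). (-1)^j * L (d - {sorted_list_of_set d ! j}) x v) = 0)"

text \<open>Simplicial operator along a monotone map alpha: [m'] \<rightarrow> [m] on labelings
  (degenerate images labelled 0).\<close>
definition omega_act :: "(nat \<Rightarrow> nat) \<Rightarrow> (nat set \<Rightarrow> 'n kform) \<Rightarrow> nat set \<Rightarrow> 'n kform" where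
  "omega_act \<alpha> L c = (if inj_on \<alpha> c then L (\<alpha> ` c) else (\<lambda>x v. 0))"

definition Cf :: "((nat \<Rightarrow> complex^'n^'n) \<Rightarrow> complex) \<Rightarrow> nat \<Rightarrow> (complex^'n) set
                  \<Rightarrow> (nat \<Rightarrow> complex^'n \<Rightarrow> complex^'n) \<Rightarrow> nat set \<Rightarrow> 'n kform" where
  "Cf T k U \<rho> c = tau T k U (map \<rho> (sorted_list_of_set c))"

end

theory Submission
  imports Defs "HOL-Complex_Analysis.Cauchy_Integral_Formula"
begin

definition pd :: "(complex^'n \<Rightarrow> complex) \<Rightarrow> 'n \<Rightarrow> complex^'n \<Rightarrow> complex" where
  "pd f j x = frechet_derivative f (at x) (axis j 1)"

lemma cvscale_axis: "cvscale c (axis j 1) = axis j c"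
  by (simp add: cvscale_def axis_def vec_eq_iff)

lemma vec_axis_sum: "(\<Sum>j\<in>UNIV. axis j (v $ j)) = (v::complex^'n)"
  by (simp add: vec_eq_iff axis_def)

lemma clinear_scale:
  assumes "linear D" "\<forall>v. D (cvscale \<i> v) = \<i> * D v"
  shows "D (cvscale c v) = c * (D v :: complex)"
proof -
  have e: "cvscale c v = Re c *\<^sub>R v + Im c *\<^sub>R cvscale \<i> v"
    apply (simp add: cvscale_def vec_eq_iff)
    by (metis complex_eq mult.assoc mult.commute scaleR_conv_of_real distrib_right)
  have "D (cvscale c v) = Re c *\<^sub>R D v + Im c *\<^sub>R D (cvscale \<i> v)"
    unfolding e using assms(1) by (simp add: linear_add linear_scale)
  also have "\<dots> = c * D v" using assms(2)
    by (simp add: scaleR_conv_of_real) (metis complex_eq distrib_right mult.assoc mult.commute)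
  finally show ?thesis .
qed

lemma hol_deriv:
  assumes "hol_fun U f" "x \<in> U"
  shows "(f has_derivative (\<lambda>v. \<Sum>j\<in>UNIV. v $ j * pd f j x)) (at x)"
proof -
  obtain D where D: "(f has_derivative D) (at x)" "\<forall>v. D (cvscale \<i> v) = \<i> * D v"
    using assms unfolding hol_fun_def by blast
  have lin: "linear D" using D(1) has_derivative_linear by blast
  have fd: "frechet_derivative f (at x) = D" using D(1) frechet_derivative_at by metis
  have "D v = (\<Sum>j\<in>UNIV. v $ j * pd f j x)" for v
  proof -
    have "D v = D (\<Sum>j\<in>UNIV. axis j (v $ j))" by (simp add: vec_axis_sum)
    also have "\<dots> = (\<Sum>j\<in>UNIV. D (axis j (v $ j)))" using lin by (simp add: linear_sum)
    also have "\<dots> = (\<Sum>j\<in>UNIV. v $ j * pd f j x)"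
      apply (rule sum.cong, simp)
      using clinear_scale[OF lin D(2), of "v $ _" "axis _ 1"]
      by (simp add: cvscale_axis pd_def fd)
    finally show ?thesis .
  qed
  then have "D = (\<lambda>v. \<Sum>j\<in>UNIV. v $ j * pd f j x)" by auto
  then show ?thesis using D(1) by simp
qed

lemma sum_axis_coef: "(\<Sum>j\<in>UNIV. axis l (1::complex) $ j * c j) = c l"
  by (simp add: axis_def if_distrib[of "\<lambda>a. a * _"] cong: if_cong)

lemma pd_eq:
  assumes "(f has_derivative (\<lambda>v. \<Sum>j\<in>UNIV. v $ j * c j)) (at x)"
  shows "pd f l x = c l"
proof -
  have "frechet_derivative f (at x) = (\<lambda>v. \<Sum>j\<in>UNIV. v $ j * c j)"
    using assms frechet_derivative_at by metis
  then show ?thesis by (simp add: pd_def sum_axis_coef)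
qed

lemma hol_funI:
  assumes "\<And>x. x \<in> U \<Longrightarrow> \<exists>c. (f has_derivative (\<lambda>v. \<Sum>j\<in>UNIV. v $ j * c j)) (at x)"
  shows "hol_fun U f"
  unfolding hol_fun_def
proof
  fix x assume "x \<in> U"
  then obtain c where c: "(f has_derivative (\<lambda>v. \<Sum>j\<in>UNIV. v $ j * c j)) (at x)" using assms by blast
  have "(\<Sum>j\<in>UNIV. cvscale \<i> v $ j * c j) = \<i> * (\<Sum>j\<in>UNIV. v $ j * c j)" for v
    by (simp add: cvscale_def sum_distrib_left mult.assoc)
  then show "\<exists>D. (f has_derivative D) (at x) \<and> (\<forall>v. D (cvscale \<i> v) = \<i> * D v)"
    using c by blast
qed

lemma hol_fun_deriv_iff:
  assumes "\<And>x. x \<in> U \<Longrightarrow> (f has_derivative (\<lambda>v. \<Sum>j\<in>UNIV. v $ j * c j x)) (at x)"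
  shows "hol_fun U f" "\<And>x l. x \<in> U \<Longrightarrow> pd f l x = c l x"
proof -
  show "hol_fun U f" by (rule hol_funI) (use assms in metis)
  show "\<And>x l. x \<in> U \<Longrightarrow> pd f l x = c l x" by (rule pd_eq) (rule assms)
qed

lemma hol_fun_subset: "hol_fun U f \<Longrightarrow> V \<subseteq> U \<Longrightarrow> hol_fun V f"
  unfolding hol_fun_def by blast

lemma hol_fun_cont: "hol_fun U f \<Longrightarrow> continuous_on U f"
  unfolding hol_fun_def
  by (meson continuous_at_imp_continuous_on has_derivative_continuous)

lemma hol_fun_const: "hol_fun U (\<lambda>x. c)"
  by (rule hol_funI[where U=U]) (rule exI[of _ "\<lambda>_. 0"], simp)

lemma hol_fun_coord: "hol_fun (U::(complex^'n) set) (\<lambda>x. x $ i)"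
proof (rule hol_funI)
  fix x :: "complex^'n"
  have "(\<lambda>v::complex^'n. v $ i) = (\<lambda>v. \<Sum>j\<in>UNIV. v $ j * (if j = i then (1::complex) else 0))"
    by (rule ext) (simp add: mult.commute[of "_ $ _"] if_distrib[of "\<lambda>a. a * _"] cong: if_cong)
  moreover have "((\<lambda>x::complex^'n. x $ i) has_derivative (\<lambda>v. v $ i)) (at x)"
    by (rule bounded_linear_imp_has_derivative) (rule bounded_linear_vec_nth)
  ultimately show "\<exists>c. ((\<lambda>x. x $ i) has_derivative (\<lambda>v. \<Sum>j\<in>UNIV. v $ j * c j)) (at x)" by metis
qed

lemma hol_fun_add:
  assumes "hol_fun U f" "hol_fun U g"
  shows "hol_fun U (\<lambda>x. f x + g x)"
proof (rule hol_funI)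
  fix x assume x: "x \<in> U"
  have "((\<lambda>x. f x + g x) has_derivative (\<lambda>v. (\<Sum>j\<in>UNIV. v $ j * pd f j x) + (\<Sum>j\<in>UNIV. v $ j * pd g j x))) (at x)"
    using hol_deriv[OF assms(1) x] hol_deriv[OF assms(2) x] by (rule has_derivative_add)
  then show "\<exists>c. ((\<lambda>x. f x + g x) has_derivative (\<lambda>v. \<Sum>j\<in>UNIV. v $ j * c j)) (at x)"
    by (intro exI[of _ "\<lambda>j. pd f j x + pd g j x"]) (simp add: sum.distrib distrib_left)
qed

lemma pd_add:
  assumes "hol_fun U f" "hol_fun U g" "x \<in> U"
  shows "pd (\<lambda>x. f x + g x) l x = pd f l x + pd g l x"
proof -
  have "((\<lambda>x. f x + g x) has_derivative (\<lambda>v. (\<Sum>j\<in>UNIV. v $ j * pd f j x) + (\<Sum>j\<in>UNIV. v $ j * pd g j x))) (at x)"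
    using hol_deriv[OF assms(1,3)] hol_deriv[OF assms(2,3)] by (rule has_derivative_add)
  then have "((\<lambda>x. f x + g x) has_derivative (\<lambda>v. \<Sum>j\<in>UNIV. v $ j * (pd f j x + pd g j x))) (at x)"
    by (simp add: sum.distrib distrib_left)
  then show ?thesis by (rule pd_eq)
qed

lemma hol_fun_mult:
  assumes "hol_fun U f" "hol_fun U g"
  shows "hol_fun U (\<lambda>x. f x * g x)"
proof (rule hol_funI)
  fix x assume x: "x \<in> U"
  have "((\<lambda>x. f x * g x) has_derivative (\<lambda>v. f x * (\<Sum>j\<in>UNIV. v $ j * pd g j x) + (\<Sum>j\<in>UNIV. v $ j * pd f j x) * g x)) (at x)"
    using hol_deriv[OF assms(1) x] hol_deriv[OF assms(2) x] by (rule has_derivative_mult)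
  then show "\<exists>c. ((\<lambda>x. f x * g x) has_derivative (\<lambda>v. \<Sum>j\<in>UNIV. v $ j * c j)) (at x)"
    by (intro exI[of _ "\<lambda>j. f x * pd g j x + pd f j x * g x"])
       (simp add: sum.distrib distrib_left sum_distrib_left sum_distrib_right algebra_simps)
qed

lemma pd_mult:
  assumes "hol_fun U f" "hol_fun U g" "x \<in> U"
  shows "pd (\<lambda>x. f x * g x) l x = f x * pd g l x + pd f l x * g x"
proof -
  have "((\<lambda>x. f x * g x) has_derivative (\<lambda>v. f x * (\<Sum>j\<in>UNIV. v $ j * pd g j x) + (\<Sum>j\<in>UNIV. v $ j * pd f j x) * g x)) (at x)"
    using hol_deriv[OF assms(1,3)] hol_deriv[OF assms(2,3)] by (rule has_derivative_mult)
  then have "((\<lambda>x. f x * g x) has_derivative (\<lambda>v. \<Sum>j\<in>UNIV. v $ j * (f x * pd g j x + pd f j x * g x))) (at x)"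
    by (simp add: sum.distrib distrib_left sum_distrib_left sum_distrib_right algebra_simps)
  then show ?thesis by (rule pd_eq)
qed

lemma hol_fun_sum:
  assumes "finite A" "\<And>a. a \<in> A \<Longrightarrow> hol_fun U (f a)"
  shows "hol_fun U (\<lambda>x. \<Sum>a\<in>A. f a x)"
  using assms by (induction A rule: finite_induct) (auto intro: hol_fun_add hol_fun_const)

lemma pd_sum:
  assumes "finite A" "\<And>a. a \<in> A \<Longrightarrow> hol_fun U (f a)" "x \<in> U"
  shows "pd (\<lambda>x. \<Sum>a\<in>A. f a x) l x = (\<Sum>a\<in>A. pd (f a) l x)"
  using assms
proof (induction A rule: finite_induct)
  case empty
  have "((\<lambda>x. 0::complex) has_derivative (\<lambda>v. \<Sum>j\<in>UNIV. v $ j * 0)) (at x)" by simp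
  from pd_eq[OF this] show ?case by simp
next
  case (insert a A)
  then show ?case
    by (simp add: pd_add[OF insert(4)[of a] hol_fun_sum[OF insert(1)]])
qed

lemma hol_fun_scale: "hol_fun U f \<Longrightarrow> hol_fun U (\<lambda>x. c * f x)"
  using hol_fun_mult[OF hol_fun_const] by blast

lemma hol_fun_minus: "hol_fun U f \<Longrightarrow> hol_fun U (\<lambda>x. - f x)"
  using hol_fun_scale[of U f "-1"] by simp

lemma hol_fun_diff: "hol_fun U f \<Longrightarrow> hol_fun U g \<Longrightarrow> hol_fun U (\<lambda>x. f x - g x)"
  using hol_fun_add[of U f "\<lambda>x. - g x"] hol_fun_minus by fastforce

lemma fd_local:
  assumes "open S" "x \<in> S" "\<And>y. y \<in> S \<Longrightarrow> f y = g y"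
  shows "frechet_derivative f (at x) = frechet_derivative g (at x)"
proof -
  have "(\<lambda>D. (f has_derivative D) (at x)) = (\<lambda>D. (g has_derivative D) (at x))"
  proof (rule ext, rule iffI)
    fix D assume "(f has_derivative D) (at x)"
    then show "(g has_derivative D) (at x)"
      by (rule has_derivative_transform_within_open[OF _ assms(1,2)]) (use assms(3) in auto)
  next
    fix D assume "(g has_derivative D) (at x)"
    then show "(f has_derivative D) (at x)"
      by (rule has_derivative_transform_within_open[OF _ assms(1,2)]) (use assms(3) in auto)
  qed
  then show ?thesis unfolding frechet_derivative_def by simp
qed

lemma pd_local:
  "open S \<Longrightarrow> x \<in> S \<Longrightarrow> (\<And>y. y \<in> S \<Longrightarrow> f y = g y) \<Longrightarrow> pd f j x = pd g j x"
  unfolding pd_def using fd_local by metis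

lemma jac_local:
  "open S \<Longrightarrow> x \<in> S \<Longrightarrow> (\<And>y. y \<in> S \<Longrightarrow> F y = G y) \<Longrightarrow> jac F x = jac G x"
  unfolding jac_def using fd_local[of S x "\<lambda>y. F y $ _" "\<lambda>y. G y $ _"] by simp

lemma dmat_local:
  "open S \<Longrightarrow> x \<in> S \<Longrightarrow> (\<And>y. y \<in> S \<Longrightarrow> F y = G y) \<Longrightarrow> dmat F x v = dmat G x v"
  unfolding dmat_def using fd_local[of S x "\<lambda>y. F y $ _ $ _" "\<lambda>y. G y $ _ $ _"] by simp

lemma hol_fun_local:
  assumes "hol_fun S f" "open S" "\<And>y. y \<in> S \<Longrightarrow> f y = g y"
  shows "hol_fun S g"
  unfolding hol_fun_def
proof
  fix x assume x: "x \<in> S"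
  then obtain D where "(f has_derivative D) (at x)" "\<forall>v. D (cvscale \<i> v) = \<i> * D v"
    using assms(1) unfolding hol_fun_def by blast
  moreover have "(g has_derivative D) (at x)"
    by (rule has_derivative_transform_within_open[OF calculation(1) assms(2) x]) (use assms(3) in auto)
  ultimately show "\<exists>D. (g has_derivative D) (at x) \<and> (\<forall>v. D (cvscale \<i> v) = \<i> * D v)" by blast
qed

lemma has_derivative_vecI:
  fixes F :: "'a::real_normed_vector \<Rightarrow> complex^'n"
  assumes "\<And>i. ((\<lambda>x. F x $ i) has_derivative F' i) (at x)"
  shows "(F has_derivative (\<lambda>v. \<chi> i. F' i v)) (at x)"
proof -
  have "((\<lambda>x. F x \<bullet> b) has_derivative (\<lambda>v. (\<chi> i. F' i v) \<bullet> b)) (at x)" if "b \<in> Basis" for b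
  proof -
    from that obtain i u where b: "b = axis i u" "u \<in> Basis" unfolding Basis_vec_def by auto
    have "((\<lambda>x. F x $ i \<bullet> u) has_derivative (\<lambda>v. F' i v \<bullet> u)) (at x)"
      using assms[of i] by (rule has_derivative_inner_left)
    then show ?thesis by (simp add: b inner_axis)
  qed
  then show ?thesis
    using has_derivative_componentwise_within[of F _ x UNIV] by simp
qed

lemma hol_map_deriv:
  assumes "hol_map U F" "x \<in> U"
  shows "(F has_derivative (\<lambda>v. jac F x *v v)) (at x)"
proof -
  have "((\<lambda>x. F x $ i) has_derivative (\<lambda>v. \<Sum>j\<in>UNIV. v $ j * pd (\<lambda>y. F y $ i) j x)) (at x)" for i
    using assms unfolding hol_map_def by (intro hol_deriv) auto
  from has_derivative_vecI[OF this] show ?thesis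
    by (simp add: matrix_vector_mult_def jac_def pd_def mult.commute)
qed

lemma jac_pd: "jac F x $ i $ j = pd (\<lambda>y. F y $ i) j x"
  by (simp add: jac_def pd_def)

lemma hol_map_cont: fixes F :: "complex^'n \<Rightarrow> complex^'n" assumes "hol_map U F" shows "continuous_on U F"
proof (rule continuous_at_imp_continuous_on, rule ballI)
  fix x assume "x \<in> U"
  show "isCont F x" using hol_map_deriv[OF assms \<open>x \<in> U\<close>] by (rule has_derivative_continuous)
qed

lemma hol_comp:
  fixes G :: "complex^'n \<Rightarrow> complex^'n"
  assumes f: "hol_fun V f" and G: "hol_map U G" and GV: "\<And>x. x \<in> U \<Longrightarrow> G x \<in> V"
  shows "hol_fun U (\<lambda>x. f (G x))"
    and "\<And>x. x \<in> U \<Longrightarrow> pd (\<lambda>x. f (G x)) l x = (\<Sum>i\<in>UNIV. pd f i (G x) * jac G x $ i $ l)"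
proof -
  have d: "((\<lambda>x. f (G x)) has_derivative (\<lambda>v. \<Sum>l\<in>UNIV. v $ l * (\<Sum>i\<in>UNIV. pd f i (G x) * jac G x $ i $ l))) (at x)"
    if x: "x \<in> U" for x
  proof -
    have "((\<lambda>x. f (G x)) has_derivative (\<lambda>v. \<Sum>i\<in>UNIV. (jac G x *v v) $ i * pd f i (G x))) (at x)"
      using has_derivative_compose[OF hol_map_deriv[OF G x] hol_deriv[OF f GV[OF x]]] by (simp add: o_def)
    moreover have "(\<Sum>i\<in>UNIV. (jac G x *v v) $ i * pd f i (G x)) = (\<Sum>l\<in>UNIV. v $ l * (\<Sum>i\<in>UNIV. pd f i (G x) * jac G x $ i $ l))" for v
    proof -
      have "(\<Sum>i\<in>UNIV. (jac G x *v v) $ i * pd f i (G x)) = (\<Sum>i\<in>UNIV. \<Sum>l\<in>UNIV. v $ l * (pd f i (G x) * jac G x $ i $ l))"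
        by (simp add: matrix_vector_mult_def sum_distrib_right sum_distrib_left mult_ac)
      also have "\<dots> = (\<Sum>l\<in>UNIV. \<Sum>i\<in>UNIV. v $ l * (pd f i (G x) * jac G x $ i $ l))" by (rule sum.swap)
      also have "\<dots> = (\<Sum>l\<in>UNIV. v $ l * (\<Sum>i\<in>UNIV. pd f i (G x) * jac G x $ i $ l))" by (simp add: sum_distrib_left)
      finally show ?thesis .
    qed
    ultimately show ?thesis by simp
  qed
  show "hol_fun U (\<lambda>x. f (G x))" using d by (rule hol_fun_deriv_iff(1))
  show "\<And>x. x \<in> U \<Longrightarrow> pd (\<lambda>x. f (G x)) l x = (\<Sum>i\<in>UNIV. pd f i (G x) * jac G x $ i $ l)"
    using d by (rule pd_eq)
qed

lemma hol_map_comp: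
  fixes G F :: "complex^'n \<Rightarrow> complex^'n"
  assumes F: "hol_map V F" and G: "hol_map U G" and GV: "\<And>x. x \<in> U \<Longrightarrow> G x \<in> V"
  shows "hol_map U (\<lambda>x. F (G x))"
    and "\<And>x. x \<in> U \<Longrightarrow> jac (\<lambda>x. F (G x)) x = jac F (G x) ** jac G x"
proof -
  have Fi: "hol_fun V (\<lambda>y. F y $ i)" for i using F unfolding hol_map_def by blast
  show "hol_map U (\<lambda>x. F (G x))" unfolding hol_map_def using hol_comp(1)[OF Fi G GV] by blast
  fix x assume x: "x \<in> U"
  show "jac (\<lambda>x. F (G x)) x = jac F (G x) ** jac G x"
    using hol_comp(2)[OF Fi G GV x]
    by (simp add: vec_eq_iff matrix_matrix_mult_def jac_pd)
qed

lemma hol_map_id: "hol_map U (\<lambda>x. x)"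
  unfolding hol_map_def using hol_fun_coord by blast

lemma jac_id: "jac (\<lambda>x. x) x = mat 1"
proof -
  have "((\<lambda>x. x $ i) has_derivative (\<lambda>v. \<Sum>j\<in>UNIV. v $ j * (if j = i then (1::complex) else 0))) (at x)" for i
  proof -
    have "(\<lambda>v::complex^'a. v $ i) = (\<lambda>v::complex^'a. \<Sum>j\<in>UNIV. v $ j * (if j = i then (1::complex) else 0))"
      by (rule ext) (simp add: mult.commute[of "_ $ _"] if_distrib[of "\<lambda>a. a * _"] cong: if_cong)
    moreover have "((\<lambda>x::complex^'a. x $ i) has_derivative (\<lambda>v. v $ i)) (at x)"
      by (rule bounded_linear_imp_has_derivative) (rule bounded_linear_vec_nth)
    ultimately show ?thesis by metis
  qed
  then have "pd (\<lambda>y. y $ i) j x = (if j = i then 1 else 0)" for i j by (rule pd_eq)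
  then show ?thesis
    by (simp add: vec_eq_iff jac_pd mat_def)
qed

lemma norm_axis: "norm (axis j (c::complex)) = norm c"
  by (simp add: norm_eq_sqrt_inner inner_axis_axis)

lemma axis_zero[simp]: "axis j 0 = (0::complex^'n)"
  by (simp add: axis_def vec_eq_iff)

lemma axis_hasderiv:
  "((\<lambda>u::complex. y + axis j u) has_derivative (\<lambda>s. axis j s)) (at u)"
proof -
  have "((\<lambda>u. (y + axis j u) $ i) has_derivative (\<lambda>s. if i = j then s else 0)) (at u)" for i
  proof (cases "i = j")
    case True
    then show ?thesis by (simp add: axis_def) (auto intro!: derivative_eq_intros)
  next
    case False
    then show ?thesis by (simp add: axis_def)
  qed
  from has_derivative_vecI[OF this] show ?thesis
    by (simp add: axis_def)
qed

lemma line_deriv: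
  assumes "hol_fun U f" "y + axis j u \<in> U"
  shows "((\<lambda>u. f (y + axis j u)) has_field_derivative pd f j (y + axis j u)) (at u)"
proof -
  have "((\<lambda>u. f (y + axis j u)) has_derivative (\<lambda>s. \<Sum>l\<in>UNIV. axis j s $ l * pd f l (y + axis j u))) (at u)"
    using has_derivative_compose[OF axis_hasderiv hol_deriv[OF assms]] by (simp add: o_def)
  moreover have "(\<lambda>s. \<Sum>l\<in>UNIV. axis j s $ l * pd f l (y + axis j u)) = (*) (pd f j (y + axis j u))"
    by (rule ext) (simp add: axis_def if_distrib[of "\<lambda>a. a * _"] cong: if_cong)
  ultimately show ?thesis unfolding has_field_derivative_def by simp
qed

lemma bl_coef: "bounded_linear (\<lambda>v::complex^'n. (\<Sum>l\<in>UNIV. v $ l * a l) * w)"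
  by (intro bounded_linear_compose[OF bounded_linear_mult_left] bounded_linear_sum
      bounded_linear_compose[OF bounded_linear_mult_left bounded_linear_vec_nth])

lemma cauchy_rep:
  fixes f :: "complex^'n \<Rightarrow> complex"
  assumes f: "hol_fun U f" and r: "r > 0" and sub: "cball x (2*r) \<subseteq> U" and y: "y \<in> ball x r"
  shows "pd f j y = 1 / (2 * of_real pi * \<i>) *
     integral (cbox 0 1) (\<lambda>t. f (y + axis j (circlepath 0 r t)) / (circlepath 0 r t - 0)^2
                               * vector_derivative (circlepath 0 r) (at t))"
proof -
  define h where "h = (\<lambda>u. f (y + axis j u))"
  have inU: "y + axis j u \<in> U" if "u \<in> cball 0 r" for u
  proof -
    have "dist x (y + axis j u) = norm ((x - y) - axis j u)" by (simp add: dist_norm algebra_simps)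
    also have "\<dots> \<le> dist x y + norm (axis j u)" by (metis dist_norm norm_triangle_ineq4)
    finally have "dist x (y + axis j u) \<le> dist x y + norm (axis j u)" .
    also have "\<dots> \<le> 2 * r" using y that by (simp add: norm_axis dist_norm)
    finally show ?thesis using sub by auto
  qed
  have hd: "(h has_field_derivative pd f j (y + axis j u)) (at u)" if "u \<in> cball 0 r" for u
    unfolding h_def using line_deriv[OF f inU[OF that]] .
  have contf: "continuous_on (cball 0 r) h"
    by (rule continuous_at_imp_continuous_on) (use hd DERIV_continuous in blast)
  have holf: "h holomorphic_on ball 0 r"
  proof (rule holomorphic_onI)
    fix u assume "u \<in> ball (0::complex) r"
    then have "(h has_field_derivative pd f j (y + axis j u)) (at u)" using hd by auto
    then show "h field_differentiable at u within ball 0 r"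
      using field_differentiable_at_within field_differentiable_def by blast
  qed
  have "(h has_field_derivative (1 / (2 * of_real pi * \<i>) * contour_integral (circlepath 0 r) (\<lambda>u. h u / (u - 0)^2))) (at 0)"
    using Cauchy_derivative_integral_circlepath(2)[OF contf holf, of 0] r by simp
  moreover have "(h has_field_derivative pd f j y) (at 0)" using hd[of 0] r by simp
  ultimately have "pd f j y = 1 / (2 * of_real pi * \<i>) * contour_integral (circlepath 0 r) (\<lambda>u. h u / (u - 0)^2)"
    using DERIV_unique by metis
  then show ?thesis by (simp add: contour_integral_integral h_def cbox_interval)
qed

lemma bl_axis: "bounded_linear (\<lambda>s::complex. axis j s :: complex^'n)"
  using axis_hasderiv[of 0 j 0] has_derivative_bounded_linear by auto

lemma cont_axis[continuous_intros]:
  "continuous_on S g \<Longrightarrow> continuous_on S (\<lambda>p. axis j (g p) :: complex^'n)"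
  using continuous_on_compose2[OF linear_continuous_on[OF bl_axis], of S g UNIV] by auto

lemma norm_circlepath0: "norm (circlepath 0 r t) = \<bar>r\<bar>"
  by (simp add: circlepath norm_mult)

lemma circlepath_nz: "r > 0 \<Longrightarrow> circlepath 0 r t \<noteq> 0"
  using norm_circlepath0[of r t] by auto

lemma inU2:
  fixes x y :: "complex^'n"
  assumes sub: "cball x (2*r) \<subseteq> U" and y: "y \<in> ball x r" and u: "norm u \<le> r"
  shows "y + axis j u \<in> U"
proof -
  have "dist x (y + axis j u) = norm ((x - y) - axis j u)" by (simp add: dist_norm algebra_simps)
  also have "\<dots> \<le> dist x y + norm (axis j u)" by (metis dist_norm norm_triangle_ineq4)
  finally have "dist x (y + axis j u) \<le> dist x y + norm (axis j u)" .
  also have "\<dots> \<le> 2 * r" using y u by (simp add: norm_axis dist_norm)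
  finally show ?thesis using sub by auto
qed

lemma contG:
  fixes g :: "complex^'n \<Rightarrow> 'b::topological_space"
  assumes g: "continuous_on U g" and r: "r > 0" and sub: "cball x (2*r) \<subseteq> U"
  shows "continuous_on (ball x r \<times> cbox 0 1) (\<lambda>p. g (fst p + axis j (circlepath 0 r (snd p))))"
proof (rule continuous_on_compose2[OF g])
  show "continuous_on (ball x r \<times> cbox 0 1) (\<lambda>p. fst p + axis j (circlepath 0 r (snd p)))"
    unfolding circlepath by (intro continuous_intros)
  show "(\<lambda>p. fst p + axis j (circlepath 0 r (snd p))) ` (ball x r \<times> cbox 0 1) \<subseteq> U"
    using inU2[OF sub] r by (auto simp: norm_circlepath0)
qed

definition Wc :: "real \<Rightarrow> real \<Rightarrow> complex" where
  "Wc r t = vector_derivative (circlepath 0 r) (at t) / (circlepath 0 r t - 0)^2"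

lemma Wc_cont: "r > 0 \<Longrightarrow> continuous_on S (Wc r)"
  unfolding Wc_def vector_derivative_circlepath unfolding circlepath
  by (intro continuous_intros) auto

lemma cauchy_rep2:
  fixes f :: "complex^'n \<Rightarrow> complex"
  assumes f: "hol_fun U f" and r: "r > 0" and sub: "cball x (2*r) \<subseteq> U" and y: "y \<in> ball x r"
  shows "pd f j y = 1 / (2 * of_real pi * \<i>) *
     integral (cbox 0 1) (\<lambda>t. f (y + axis j (circlepath 0 r t)) * Wc r t)"
  using cauchy_rep[OF assms, of j] by (simp add: Wc_def)

lemma pd_cont:
  fixes f :: "complex^'n \<Rightarrow> complex"
  assumes U: "open U" and f: "hol_fun U f"
  shows "continuous_on U (pd f j)"
proof -
  have "isCont (pd f j) x" if x: "x \<in> U" for x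
  proof -
    obtain e where e: "e > 0" "cball x e \<subseteq> U" using U x open_contains_cball by blast
    define r where "r = e / 2"
    have r: "r > 0" and sub: "cball x (2*r) \<subseteq> U" using e by (auto simp: r_def)
    have c1: "continuous_on (ball x r \<times> cbox 0 1) (\<lambda>p. f (fst p + axis j (circlepath 0 r (snd p))))"
      by (rule contG[OF hol_fun_cont[OF f] r sub])
    have c2: "continuous_on (ball x r \<times> cbox 0 1) (\<lambda>p. Wc r (snd p))"
      by (rule continuous_on_compose2[OF Wc_cont[OF r], of _ snd]) (auto intro: continuous_on_snd continuous_on_id)
    have cK: "continuous_on (ball x r \<times> cbox 0 1) (\<lambda>p. f (fst p + axis j (circlepath 0 r (snd p))) * Wc r (snd p))"
      using c1 c2 by (rule continuous_on_mult)
    have "continuous_on (ball x r) (\<lambda>y. integral (cbox 0 1) (\<lambda>t. f (y + axis j (circlepath 0 r t)) * Wc r t))"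
      by (rule integral_continuous_on_param) (unfold case_prod_beta', rule cK)
    then have "continuous_on (ball x r) (\<lambda>y. 1 / (2 * of_real pi * \<i>) * integral (cbox 0 1) (\<lambda>t. f (y + axis j (circlepath 0 r t)) * Wc r t))"
      by (rule continuous_on_mult[OF continuous_on_const])
    then have "continuous_on (ball x r) (pd f j)"
      by (rule continuous_on_eq) (use cauchy_rep2[OF f r sub] in auto)
    then have "\<forall>y\<in>ball x r. isCont (pd f j) y" using continuous_on_eq_continuous_at[of "ball x r"] by blast
    then show ?thesis using r by simp
  qed
  then show ?thesis by (simp add: continuous_at_imp_continuous_on)
qed

lemma hol_pd:
  fixes f :: "complex^'n \<Rightarrow> complex"
  assumes U: "open U" and f: "hol_fun U f"
  shows "hol_fun U (pd f j)"
  unfolding hol_fun_def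
proof
  fix x assume x: "x \<in> U"
  obtain e where e: "e > 0" "cball x e \<subseteq> U" using U x open_contains_cball by blast
  define r where "r = e / 2"
  have r: "r > 0" and sub: "cball x (2*r) \<subseteq> U" using e by (auto simp: r_def)
  define c where "c = (\<lambda>t. axis j (circlepath 0 r t) :: complex^'n)"
  define K where "K = (\<lambda>y t. f (y + c t) * Wc r t)"
  define L where "L = (\<lambda>y t (v::complex^'n). (\<Sum>l\<in>UNIV. v $ l * pd f l (y + c t)) * Wc r t)"
  define FX where "FX = (\<lambda>y t. Blinfun (L y t))"
  have FXa: "blinfun_apply (FX y t) = L y t" for y t
    unfolding FX_def L_def by (rule bounded_linear_Blinfun_apply[OF bl_coef])
  have inU: "y + c t \<in> U" if "y \<in> ball x r" for y t
    unfolding c_def by (rule inU2[OF sub that]) (use r in \<open>simp add: norm_circlepath0\<close>)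
  have dK: "((\<lambda>y. K y t) has_derivative blinfun_apply (FX y t)) (at y within ball x r)"
    if "y \<in> ball x r" "t \<in> cbox 0 1" for y t
  proof -
    have tr: "((\<lambda>y. y + c t) has_derivative (\<lambda>v. v)) (at y)"
      by (auto intro!: derivative_eq_intros)
    have "((\<lambda>y. f (y + c t)) has_derivative (\<lambda>v. \<Sum>l\<in>UNIV. v $ l * pd f l (y + c t))) (at y)"
      using has_derivative_compose[OF tr hol_deriv[OF f inU[OF that(1)]]] by (simp add: o_def)
    then have "((\<lambda>y. K y t) has_derivative L y t) (at y)"
      unfolding K_def L_def by (rule has_derivative_mult_left)
    then show ?thesis unfolding FXa by (rule has_derivative_at_withinI)
  qed
  have intK: "K y integrable_on cbox 0 1" if "y \<in> ball x r" for y
  proof (rule integrable_continuous)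
    have "continuous_on (cbox 0 1) (\<lambda>t. f (y + c t))"
    proof (rule continuous_on_compose2[OF hol_fun_cont[OF f]])
      show "continuous_on (cbox 0 1) (\<lambda>t. y + c t)" unfolding c_def circlepath by (intro continuous_intros)
      show "(\<lambda>t. y + c t) ` cbox 0 1 \<subseteq> U" using inU[OF that] by auto
    qed
    then show "continuous_on (cbox 0 1) (K y)" unfolding K_def by (intro continuous_intros Wc_cont r)
  qed
  have cFX: "continuous_on (ball x r \<times> cbox 0 1) (\<lambda>(y, t). FX y t)"
    unfolding case_prod_beta'
  proof (rule continuous_on_blinfun_componentwise)
    fix b :: "complex^'n" assume "b \<in> Basis"
    have cl: "continuous_on (ball x r \<times> cbox 0 1) (\<lambda>p. pd f l (fst p + c (snd p)))" for l
      unfolding c_def by (rule contG[OF pd_cont[OF U f] r sub])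
    have c2: "continuous_on (ball x r \<times> cbox 0 1) (\<lambda>p. Wc r (snd p))"
      by (rule continuous_on_compose2[OF Wc_cont[OF r], of _ snd]) (auto intro: continuous_on_snd continuous_on_id)
    have "continuous_on (ball x r \<times> cbox 0 1) (\<lambda>p. (\<Sum>l\<in>UNIV. b $ l * pd f l (fst p + c (snd p))) * Wc r (snd p))"
      by (intro continuous_on_mult c2 continuous_on_sum continuous_on_mult[OF continuous_on_const] cl)
    then show "continuous_on (ball x r \<times> cbox 0 1) (\<lambda>p. blinfun_apply (FX (fst p) (snd p)) b)"
      unfolding FXa L_def .
  qed
  have LR: "((\<lambda>y. integral (cbox 0 1) (K y)) has_derivative blinfun_apply (integral (cbox 0 1) (FX x))) (at x within ball x r)"
    by (rule leibniz_rule[OF dK intK cFX]) (use r in auto)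
  then have LR': "((\<lambda>y. integral (cbox 0 1) (K y)) has_derivative blinfun_apply (integral (cbox 0 1) (FX x))) (at x)"
    using r at_within_open[of x "ball x r"] by simp
  define D where "D = (\<lambda>v. 1 / (2 * of_real pi * \<i>) * blinfun_apply (integral (cbox 0 1) (FX x)) v)"
  have eq: "1 / (2 * of_real pi * \<i>) * integral (cbox 0 1) (K y) = pd f j y" if "y \<in> ball x r" for y
    using cauchy_rep2[OF f r sub that, of j] by (simp add: K_def c_def)
  have "(pd f j has_derivative D) (at x)"
    unfolding D_def
    by (rule has_derivative_transform_within_open[OF has_derivative_mult_right[OF LR'] open_ball, of x r])
       (use r eq in auto)
  moreover have "D (cvscale \<i> v) = \<i> * D v" for v
  proof -
    have cx: "continuous_on (cbox 0 1) (FX x)"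
      by (rule continuous_on_compose2[OF cFX[unfolded case_prod_beta'], of _ "\<lambda>t. (x, t)", simplified])
         (use r in \<open>auto intro!: continuous_intros\<close>)
    have ix: "FX x integrable_on cbox 0 1" by (rule integrable_continuous[OF cx])
    have "FX x t (cvscale \<i> v) = \<i> * FX x t v" for t
      by (simp add: FXa L_def cvscale_def sum_distrib_left mult_ac)
    then show ?thesis
      unfolding D_def blinfun_apply_integral[OF ix] by simp
  qed
  ultimately show "\<exists>D. (pd f j has_derivative D) (at x) \<and> (\<forall>v. D (cvscale \<i> v) = \<i> * D v)" by blast
qed

definition holM :: "(complex^'n) set \<Rightarrow> (complex^'n \<Rightarrow> complex^'m^'k) \<Rightarrow> bool" where
  "holM U M \<longleftrightarrow> (\<forall>i j. hol_fun U (\<lambda>x. M x $ i $ j))"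

lemma hol_fun_fd:
  assumes "hol_fun U g" "x \<in> U"
  shows "(g has_derivative frechet_derivative g (at x)) (at x)"
  using assms unfolding hol_fun_def by (meson differentiableI frechet_derivative_works)

lemma fd_hol:
  assumes "hol_fun U g" "x \<in> U"
  shows "frechet_derivative g (at x) v = (\<Sum>l\<in>UNIV. v $ l * pd g l x)"
  using frechet_derivative_at[OF hol_deriv[OF assms]] by metis

lemma dmat_hol:
  assumes "holM U M" "x \<in> U"
  shows "dmat M x v = (\<chi> i j. \<Sum>l\<in>UNIV. v $ l * pd (\<lambda>y. M y $ i $ j) l x)"
proof -
  have "frechet_derivative (\<lambda>y. M y $ i $ j) (at x) v = (\<Sum>l\<in>UNIV. v $ l * pd (\<lambda>y. M y $ i $ j) l x)" for i j
    using assms fd_hol unfolding holM_def by blast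
  then show ?thesis by (simp add: dmat_def)
qed

lemma matrix_diff_ldistrib: "(A::complex^'n^'m) ** (B - C) = A ** B - A ** C"
  by (simp add: vec_eq_iff matrix_matrix_mult_def algebra_simps sum_subtractf)
lemma matrix_diff_rdistrib: "((B::complex^'n^'m) - C) ** A = B ** A - C ** A"
  by (simp add: vec_eq_iff matrix_matrix_mult_def algebra_simps sum_subtractf)
lemma matrix_add_rdistrib': "((B::complex^'n^'m) + C) ** A = B ** A + C ** A"
  by (simp add: vec_eq_iff matrix_matrix_mult_def algebra_simps sum.distrib)
lemma matrix_neg_left: "(- (B::complex^'n^'m)) ** A = - (B ** A)"
  by (simp add: vec_eq_iff matrix_matrix_mult_def sum_negf)
lemma matrix_neg_right: "(A::complex^'n^'m) ** (- B) = - (A ** B)"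
  by (simp add: vec_eq_iff matrix_matrix_mult_def sum_negf)
lemma matrix_zero_left[simp]: "(0::complex^'n^'m) ** A = 0"
  by (simp add: vec_eq_iff matrix_matrix_mult_def)
lemma matrix_zero_right[simp]: "(A::complex^'n^'m) ** 0 = 0"
  by (simp add: vec_eq_iff matrix_matrix_mult_def)

lemma holM_mult:
  assumes A: "holM U A" and B: "holM U B"
  shows "holM U (\<lambda>x. A x ** B x)"
  using assms unfolding holM_def matrix_matrix_mult_def
  by (simp add: hol_fun_sum hol_fun_mult)

lemma dmat_mult:
  assumes A: "holM U A" and B: "holM U B" and x: "x \<in> U"
  shows "dmat (\<lambda>x. A x ** B x) x v = dmat A x v ** B x + A x ** dmat B x v"
proof -
  have e: "frechet_derivative (\<lambda>y. \<Sum>k\<in>UNIV. A y $ i $ k * B y $ k $ j) (at x) v =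
     (\<Sum>k\<in>UNIV. A x $ i $ k * frechet_derivative (\<lambda>y. B y $ k $ j) (at x) v
             + frechet_derivative (\<lambda>y. A y $ i $ k) (at x) v * B x $ k $ j)" for i j
  proof -
    have "((\<lambda>y. \<Sum>k\<in>UNIV. A y $ i $ k * B y $ k $ j) has_derivative
       (\<lambda>v. \<Sum>k\<in>UNIV. A x $ i $ k * frechet_derivative (\<lambda>y. B y $ k $ j) (at x) v
             + frechet_derivative (\<lambda>y. A y $ i $ k) (at x) v * B x $ k $ j)) (at x)"
      by (intro has_derivative_sum has_derivative_mult hol_fun_fd[OF _ x])
         (use A B in \<open>auto simp: holM_def\<close>)
    note fd = frechet_derivative_at[OF this, symmetric]
    show ?thesis using fd by simp
  qed
  show ?thesis
    unfolding dmat_def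
    by (simp add: vec_eq_iff e matrix_matrix_mult_def sum.distrib dmat_def add.commute)
qed

lemma holM_comp:
  fixes F :: "complex^'n \<Rightarrow> complex^'n"
  assumes A: "holM V A" and F: "hol_map U F" and FV: "\<And>x. x \<in> U \<Longrightarrow> F x \<in> V"
  shows "holM U (\<lambda>x. A (F x))"
  using assms hol_comp(1) unfolding holM_def by blast

lemma dmat_comp:
  fixes F :: "complex^'n \<Rightarrow> complex^'n"
  assumes A: "holM V A" and F: "hol_map U F" and FV: "\<And>x. x \<in> U \<Longrightarrow> F x \<in> V" and x: "x \<in> U"
  shows "dmat (\<lambda>x. A (F x)) x v = dmat A (F x) (jac F x *v v)"
proof -
  have "frechet_derivative (\<lambda>y. A (F y) $ i $ j) (at x) v = frechet_derivative (\<lambda>y. A y $ i $ j) (at (F x)) (jac F x *v v)" for i j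
  proof -
    have "((\<lambda>y. A (F y) $ i $ j) has_derivative (\<lambda>v. frechet_derivative (\<lambda>y. A y $ i $ j) (at (F x)) (jac F x *v v))) (at x)"
      using has_derivative_compose[OF hol_map_deriv[OF F x] hol_fun_fd[of V _ "F x"]] A FV[OF x]
      by (auto simp: holM_def o_def)
    from frechet_derivative_at[OF this] show ?thesis by metis
  qed
  then show ?thesis by (simp add: dmat_def)
qed

lemma dmat_const_local:
  assumes "open S" "x \<in> S" "\<And>y. y \<in> S \<Longrightarrow> M y = C"
  shows "dmat M x v = 0"
proof -
  have "dmat M x v = dmat (\<lambda>y. C) x v" by (rule dmat_local[OF assms])
  also have "\<dots> = 0"
    using frechet_derivative_at[OF has_derivative_const[of "C $ _ $ _" "at x"]]
    by (simp add: dmat_def vec_eq_iff)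
  finally show ?thesis .
qed

lemma holM_jac:
  fixes F :: "complex^'n \<Rightarrow> complex^'n"
  assumes "open U" "hol_map U F"
  shows "holM U (jac F)"
  using assms hol_pd unfolding holM_def hol_map_def jac_pd by blast

lemma minv_eq:
  fixes A B :: "complex^'n^'n"
  assumes "A ** B = mat 1"
  shows "minv A = B"
proof -
  have BA: "B ** A = mat 1" using assms matrix_left_right_inverse by blast
  have ex: "\<exists>B. A ** B = mat 1 \<and> B ** A = mat 1" using assms BA by blast
  obtain C where C: "A ** C = mat 1" "C ** A = mat 1" "minv A = C"
    using someI_ex[OF ex] unfolding minv_def by blast
  have "C = C ** (A ** B)" by (simp add: assms)
  also have "\<dots> = B" by (simp add: matrix_mul_assoc C(2))
  finally show ?thesis using C(3) by simp
qed

lemma dmat_linear: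
  assumes "holM U M" "x \<in> U"
  shows "dmat M x (cvscale c v) = cmscale c (dmat M x v)"
    and "dmat M x (v + w) = dmat M x v + dmat M x w"
  using assms by (simp_all add: dmat_hol cmscale_def cvscale_def vec_eq_iff sum_distrib_left
      sum.distrib algebra_simps)

lemma chart_facts:
  fixes \<sigma> :: "complex^'n \<Rightarrow> complex^'n"
  assumes "chart U \<sigma>"
  shows "open (\<sigma> ` U)" "hol_map U \<sigma>" "hol_map (\<sigma> ` U) (inv_into U \<sigma>)" "open U"
    "\<And>x. x \<in> U \<Longrightarrow> inv_into U \<sigma> (\<sigma> x) = x"
    "\<And>y. y \<in> \<sigma> ` U \<Longrightarrow> \<sigma> (inv_into U \<sigma> y) = y"
    "\<And>y. y \<in> \<sigma> ` U \<Longrightarrow> inv_into U \<sigma> y \<in> U"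
  using assms unfolding chart_def biholo_def
  by (auto simp: inv_into_f_f f_inv_into_f inv_into_into)

definition Nj :: "(complex^'n) set \<Rightarrow> (complex^'n \<Rightarrow> complex^'n) \<Rightarrow> complex^'n \<Rightarrow> complex^'n^'n" where
  "Nj U \<sigma> x = jac (inv_into U \<sigma>) (\<sigma> x)"

lemma chart_jac_inv:
  fixes \<sigma> :: "complex^'n \<Rightarrow> complex^'n"
  assumes c: "chart U \<sigma>" and x: "x \<in> U"
  shows "Nj U \<sigma> x ** jac \<sigma> x = mat 1" "jac \<sigma> x ** Nj U \<sigma> x = mat 1"
    "minv (jac \<sigma> x) = Nj U \<sigma> x" "minv (Nj U \<sigma> x) = jac \<sigma> x" "invertible (jac \<sigma> x)" "invertible (Nj U \<sigma> x)"
proof -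
  note cf = chart_facts[OF c]
  have "jac (\<lambda>x. inv_into U \<sigma> (\<sigma> x)) x = jac (inv_into U \<sigma>) (\<sigma> x) ** jac \<sigma> x"
    by (rule hol_map_comp(2)[OF cf(3) cf(2) _ x]) auto
  moreover have "jac (\<lambda>x. inv_into U \<sigma> (\<sigma> x)) x = jac (\<lambda>x. x) x"
    by (rule jac_local[OF cf(4) x]) (use cf(5) in auto)
  ultimately show 1: "Nj U \<sigma> x ** jac \<sigma> x = mat 1" by (simp add: jac_id Nj_def)
  then show 2: "jac \<sigma> x ** Nj U \<sigma> x = mat 1" using matrix_left_right_inverse by blast
  show "minv (jac \<sigma> x) = Nj U \<sigma> x" using 2 by (rule minv_eq)
  show "minv (Nj U \<sigma> x) = jac \<sigma> x" using 1 by (rule minv_eq)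
  show "invertible (jac \<sigma> x)" "invertible (Nj U \<sigma> x)" using 1 2 invertible_def by blast+
qed

lemma holM_Nj:
  fixes \<sigma> :: "complex^'n \<Rightarrow> complex^'n"
  assumes c: "chart U \<sigma>"
  shows "holM U (Nj U \<sigma>)"
proof -
  note cf = chart_facts[OF c]
  show ?thesis unfolding Nj_def
    by (rule holM_comp[OF holM_jac[OF cf(1,3)] cf(2)]) auto
qed

lemma mat_simps:
  fixes A B X :: "complex^'n^'n"
  assumes "A ** B = mat 1"
  shows "A ** B = mat 1" "X ** A ** B = X"
  using assms by (simp_all flip: matrix_mul_assoc)

lemma dmat_Nj:
  fixes \<sigma> :: "complex^'n \<Rightarrow> complex^'n"
  assumes c: "chart U \<sigma>" and x: "x \<in> U"
  shows "dmat (Nj U \<sigma>) x v = - (Nj U \<sigma> x ** dmat (jac \<sigma>) x v ** Nj U \<sigma> x)"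
proof -
  note cf = chart_facts[OF c]
  have hN: "holM U (Nj U \<sigma>)" by (rule holM_Nj[OF c])
  have hM: "holM U (jac \<sigma>)" by (rule holM_jac[OF cf(4,2)])
  have "dmat (\<lambda>x. Nj U \<sigma> x ** jac \<sigma> x) x v = 0"
    by (rule dmat_const_local[OF cf(4) x]) (rule chart_jac_inv(1)[OF c])
  then have z: "dmat (Nj U \<sigma>) x v ** jac \<sigma> x + Nj U \<sigma> x ** dmat (jac \<sigma>) x v = 0"
    by (simp add: dmat_mult[OF hN hM x])
  have "dmat (Nj U \<sigma>) x v = dmat (Nj U \<sigma>) x v ** (jac \<sigma> x ** Nj U \<sigma> x)"
    using chart_jac_inv(2)[OF c x] by simp
  also have "\<dots> = (dmat (Nj U \<sigma>) x v ** jac \<sigma> x) ** Nj U \<sigma> x" by (simp add: matrix_mul_assoc)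
  also have "dmat (Nj U \<sigma>) x v ** jac \<sigma> x = - (Nj U \<sigma> x ** dmat (jac \<sigma>) x v)"
    using z by (simp only: eq_neg_iff_add_eq_0)
  finally show ?thesis by (simp add: matrix_neg_left)
qed

definition bet :: "(complex^'n \<Rightarrow> complex^'n) \<Rightarrow> complex^'n \<Rightarrow> complex^'n \<Rightarrow> complex^'n^'n" where
  "bet \<sigma> x v = minv (jac \<sigma> x) ** dmat (jac \<sigma>) x v"

lemma trans_hol:
  fixes \<sigma>p \<sigma>q :: "complex^'n \<Rightarrow> complex^'n"
  assumes cp: "chart U \<sigma>p" and cq: "chart U \<sigma>q"
  shows "hol_map (\<sigma>q ` U) (\<sigma>p \<circ> inv_into U \<sigma>q)"
    "\<And>x. x \<in> U \<Longrightarrow> jac (\<sigma>p \<circ> inv_into U \<sigma>q) (\<sigma>q x) = jac \<sigma>p x ** Nj U \<sigma>q x"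
    "\<And>x. x \<in> U \<Longrightarrow> (\<sigma>p \<circ> inv_into U \<sigma>q) (\<sigma>q x) = \<sigma>p x"
proof -
  note p = chart_facts[OF cp] and q = chart_facts[OF cq]
  show h: "hol_map (\<sigma>q ` U) (\<sigma>p \<circ> inv_into U \<sigma>q)"
    using hol_map_comp(1)[OF p(2) q(3) q(7)] by (simp add: o_def)
  fix x assume x: "x \<in> U"
  show "jac (\<sigma>p \<circ> inv_into U \<sigma>q) (\<sigma>q x) = jac \<sigma>p x ** Nj U \<sigma>q x"
    using hol_map_comp(2)[OF p(2) q(3) q(7), of "\<sigma>q x"] x q(5)[OF x]
    by (simp add: o_def Nj_def)
  show "(\<sigma>p \<circ> inv_into U \<sigma>q) (\<sigma>q x) = \<sigma>p x" using q(5)[OF x] by simp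
qed

lemma trans_dmat:
  fixes \<sigma>p \<sigma>q :: "complex^'n \<Rightarrow> complex^'n"
  assumes cp: "chart U \<sigma>p" and cq: "chart U \<sigma>q" and x: "x \<in> U"
  shows "dmat (jac (\<sigma>p \<circ> inv_into U \<sigma>q)) (\<sigma>q x) (jac \<sigma>q x *v v)
          = dmat (jac \<sigma>p) x v ** Nj U \<sigma>q x + jac \<sigma>p x ** dmat (Nj U \<sigma>q) x v"
proof -
  note p = chart_facts[OF cp] and q = chart_facts[OF cq]
  have hJ: "holM (\<sigma>q ` U) (jac (\<sigma>p \<circ> inv_into U \<sigma>q))"
    by (rule holM_jac[OF q(1) trans_hol(1)[OF cp cq]])
  have "dmat (jac (\<sigma>p \<circ> inv_into U \<sigma>q)) (\<sigma>q x) (jac \<sigma>q x *v v)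
       = dmat (\<lambda>x. jac (\<sigma>p \<circ> inv_into U \<sigma>q) (\<sigma>q x)) x v"
    by (rule dmat_comp[OF hJ q(2) _ x, symmetric]) auto
  also have "\<dots> = dmat (\<lambda>x. jac \<sigma>p x ** Nj U \<sigma>q x) x v"
    by (rule dmat_local[OF q(4) x]) (use trans_hol(2)[OF cp cq] in auto)
  also have "\<dots> = dmat (jac \<sigma>p) x v ** Nj U \<sigma>q x + jac \<sigma>p x ** dmat (Nj U \<sigma>q) x v"
    by (rule dmat_mult[OF holM_jac[OF p(4,2)] holM_Nj[OF cq] x])
  finally show ?thesis .
qed

lemma theta_at:
  fixes \<sigma>p \<sigma>q :: "complex^'n \<Rightarrow> complex^'n"
  assumes cp: "chart U \<sigma>p" and cq: "chart U \<sigma>q" and x: "x \<in> U"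
  shows "theta (\<sigma>p \<circ> inv_into U \<sigma>q) (\<sigma>q x) (jac \<sigma>q x *v v)
          = jac \<sigma>q x ** (bet \<sigma>p x v - bet \<sigma>q x v) ** Nj U \<sigma>q x"
proof -
  define Mp where "Mp = jac \<sigma>p x"
  define Mq where "Mq = jac \<sigma>q x"
  define Np where "Np = Nj U \<sigma>p x"
  define Nq where "Nq = Nj U \<sigma>q x"
  define dMp where "dMp = dmat (jac \<sigma>p) x v"
  define dMq where "dMq = dmat (jac \<sigma>q) x v"
  have pp: "Np ** Mp = mat 1" "Mp ** Np = mat 1" "minv Mp = Np"
    using chart_jac_inv[OF cp x] by (auto simp: Np_def Mp_def)
  have qq: "Nq ** Mq = mat 1" "Mq ** Nq = mat 1" "minv Mq = Nq"
    using chart_jac_inv[OF cq x] by (auto simp: Nq_def Mq_def)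
  have mi: "minv (Mp ** Nq) = Mq ** Np"
  proof (rule minv_eq)
    have "Mp ** Nq ** (Mq ** Np) = Mp ** (Nq ** Mq) ** Np" by (simp add: matrix_mul_assoc)
    then show "Mp ** Nq ** (Mq ** Np) = mat 1" using pp qq by simp
  qed
  have "theta (\<sigma>p \<circ> inv_into U \<sigma>q) (\<sigma>q x) (jac \<sigma>q x *v v)
      = (Mq ** Np) ** (dMp ** Nq + Mp ** (- (Nq ** dMq ** Nq)))"
    unfolding theta_def trans_hol(2)[OF cp cq x] trans_dmat[OF cp cq x] dmat_Nj[OF cq x] mi[unfolded Mp_def Nq_def Mq_def Np_def]
    by (simp add: Mp_def Mq_def Np_def Nq_def dMp_def dMq_def)
  also have "\<dots> = Mq ** (Np ** dMp) ** Nq - Mq ** (Np ** Mp) ** (Nq ** dMq) ** Nq"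
    by (simp add: matrix_add_ldistrib matrix_neg_right matrix_mul_assoc matrix_diff_ldistrib)
  also have "\<dots> = Mq ** (Np ** dMp - Nq ** dMq) ** Nq"
    using pp by (simp add: matrix_diff_ldistrib matrix_diff_rdistrib matrix_mul_assoc)
  finally show ?thesis
    by (simp add: bet_def chart_jac_inv(3)[OF cp x] chart_jac_inv(3)[OF cq x] Mp_def Mq_def Np_def Nq_def dMp_def dMq_def)
qed

lemma Theta_at:
  fixes \<sigma>a \<sigma>r \<sigma>k :: "complex^'n \<Rightarrow> complex^'n"
  assumes ca: "chart U \<sigma>a" and cr: "chart U \<sigma>r" and ck: "chart U \<sigma>k" and x: "x \<in> U"
  shows "sharp (\<sigma>r \<circ> inv_into U \<sigma>k) (theta (\<sigma>a \<circ> inv_into U \<sigma>r)) (\<sigma>k x) (jac \<sigma>k x *v v)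
       = jac \<sigma>k x ** (bet \<sigma>a x v - bet \<sigma>r x v) ** Nj U \<sigma>k x"
proof -
  define Mr where "Mr = jac \<sigma>r x"
  define Mk where "Mk = jac \<sigma>k x"
  define Nr where "Nr = Nj U \<sigma>r x"
  define Nk where "Nk = Nj U \<sigma>k x"
  define X where "X = bet \<sigma>a x v - bet \<sigma>r x v"
  have rr: "Nr ** Mr = mat 1" "Mr ** Nr = mat 1"
    using chart_jac_inv[OF cr x] by (auto simp: Nr_def Mr_def)
  have kk: "Nk ** Mk = mat 1" "Mk ** Nk = mat 1"
    using chart_jac_inv[OF ck x] by (auto simp: Nk_def Mk_def)
  have mi: "minv (Mr ** Nk) = Mk ** Nr"
  proof (rule minv_eq)
    have "Mr ** Nk ** (Mk ** Nr) = Mr ** (Nk ** Mk) ** Nr" by (simp add: matrix_mul_assoc)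
    then show "Mr ** Nk ** (Mk ** Nr) = mat 1" using rr kk by simp
  qed
  have vv: "(Mr ** Nk) *v (Mk *v v) = Mr *v v"
  proof -
    have "(Mr ** Nk) *v (Mk *v v) = (Mr ** (Nk ** Mk)) *v v" by (simp add: matrix_vector_mul_assoc matrix_mul_assoc)
    then show ?thesis using kk by simp
  qed
  have "sharp (\<sigma>r \<circ> inv_into U \<sigma>k) (theta (\<sigma>a \<circ> inv_into U \<sigma>r)) (\<sigma>k x) (jac \<sigma>k x *v v)
      = (Mk ** Nr) ** (Mr ** X ** Nr) ** (Mr ** Nk)"
    unfolding sharp_def trans_hol(2)[OF cr ck x] trans_hol(3)[OF cr ck x]
    using mi vv theta_at[OF ca cr x, of v]
    by (simp add: Mr_def Mk_def Nr_def Nk_def X_def)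
  also have "\<dots> = Mk ** (Nr ** Mr) ** X ** (Nr ** Mr) ** Nk" by (simp add: matrix_mul_assoc)
  also have "\<dots> = Mk ** X ** Nk" using rr by simp
  finally show ?thesis by (simp add: Mk_def X_def Nk_def)
qed

lemma multilin_cong:
  assumes "multilin scl k F" "\<And>r. r < k \<Longrightarrow> v r = w r"
  shows "F v = F w"
  using assms unfolding multilin_def by blast

lemma KF:
  fixes T :: "(nat \<Rightarrow> complex^'n^'n) \<Rightarrow> complex" and \<sigma>s :: "(complex^'n \<Rightarrow> complex^'n) list"
  assumes ml: "multilin cmscale k T" and gl: "gl_invariant k T"
    and len: "length \<sigma>s = Suc k" and ch: "\<And>i. i \<le> k \<Longrightarrow> chart U (\<sigma>s ! i)" and x: "x \<in> U"
  shows "tau T k U \<sigma>s x v = (\<Sum>p | p permutes {..<k}. of_int (sign p) *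
            T (\<lambda>r. bet (\<sigma>s ! r) x (v (p r)) - bet (\<sigma>s ! Suc r) x (v (p r))))"
proof -
  define Mk where "Mk = jac (\<sigma>s ! k) x"
  define Nk where "Nk = Nj U (\<sigma>s ! k) x"
  have inv: "invertible Nk" "minv Nk = Mk"
    using chart_jac_inv[OF ch[of k] x] by (auto simp: Nk_def Mk_def)
  have g: "\<And>M. T (\<lambda>r. minv Nk ** M r ** Nk) = T M"
    using gl inv(1) unfolding gl_invariant_def by blast
  have eqT: "T (\<lambda>r. sharp ((\<sigma>s ! Suc r) \<circ> inv_into U (\<sigma>s ! k))
                  (theta ((\<sigma>s ! (Suc r - 1)) \<circ> inv_into U (\<sigma>s ! Suc r))) ((\<sigma>s ! k) x) (Mk *v v (p r)))
       = T (\<lambda>r. bet (\<sigma>s ! r) x (v (p r)) - bet (\<sigma>s ! Suc r) x (v (p r)))" for p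
  proof -
    have "T (\<lambda>r. sharp ((\<sigma>s ! Suc r) \<circ> inv_into U (\<sigma>s ! k))
                  (theta ((\<sigma>s ! (Suc r - 1)) \<circ> inv_into U (\<sigma>s ! Suc r))) ((\<sigma>s ! k) x) (Mk *v v (p r)))
       = T (\<lambda>r. minv Nk ** (bet (\<sigma>s ! r) x (v (p r)) - bet (\<sigma>s ! Suc r) x (v (p r))) ** Nk)"
    proof (rule multilin_cong[OF ml])
      fix r assume r: "r < k"
      show "sharp ((\<sigma>s ! Suc r) \<circ> inv_into U (\<sigma>s ! k))
                  (theta ((\<sigma>s ! (Suc r - 1)) \<circ> inv_into U (\<sigma>s ! Suc r))) ((\<sigma>s ! k) x) (Mk *v v (p r))
          = minv Nk ** (bet (\<sigma>s ! r) x (v (p r)) - bet (\<sigma>s ! Suc r) x (v (p r))) ** Nk"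
        using Theta_at[OF ch[of r] ch[of "Suc r"] ch[of k] x, of "v (p r)"] r inv(2)
        by (simp add: Mk_def Nk_def)
    qed
    also have "\<dots> = T (\<lambda>r. bet (\<sigma>s ! r) x (v (p r)) - bet (\<sigma>s ! Suc r) x (v (p r)))"
      by (rule g)
    finally show ?thesis .
  qed
  show ?thesis
    unfolding tau_def Let_def pullk_def Twedge_def
    using eqT by (simp add: Mk_def)
qed

lemma cmscale_0[simp]: "cmscale 0 M = 0"
  by (simp add: cmscale_def vec_eq_iff)

lemma ml_add':
  assumes "multilin scl k T" "r < k" "f r = a + b"
  shows "T f = T (f(r := a)) + T (f(r := b))"
proof -
  have "f = f(r := a + b)" using assms(3) by auto
  then show ?thesis using assms(1,2) unfolding multilin_def by metis
qed

lemma ml_scale':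
  assumes "multilin scl k T" "r < k" "f r = scl c a"
  shows "T f = c * T (f(r := a))"
proof -
  have "f = f(r := scl c a)" using assms(3) by auto
  then show ?thesis using assms(1,2) unfolding multilin_def by metis
qed

lemma ml_add_upd:
  assumes "multilin scl k T" "r < k"
  shows "T (f(r := a + b)) = T (f(r := a)) + T (f(r := b))"
  using assms unfolding multilin_def by blast

lemma ml_scale_upd:
  assumes "multilin scl k T" "r < k"
  shows "T (f(r := scl c a)) = c * T (f(r := a))"
  using assms unfolding multilin_def by blast

lemma ml_zero:
  assumes "multilin cmscale k T" "r < k" "f r = 0"
  shows "T f = 0"
  using ml_scale'[OF assms(1,2), of f 0 0] assms(3) by simp

lemma ml_sum:
  assumes ml: "multilin cmscale k T" and r: "r < k" and fin: "finite A"
  shows "T (f(r := \<Sum>a\<in>A. g a)) = (\<Sum>a\<in>A. T (f(r := g a)))"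
  using fin
proof (induction A rule: finite_induct)
  case empty
  then show ?case using ml_zero[OF ml r] by simp
next
  case (insert a A)
  have "T (f(r := \<Sum>a\<in>insert a A. g a)) = T (f(r := g a + (\<Sum>a\<in>A. g a)))"
    using insert.hyps by simp
  also have "\<dots> = T (f(r := g a)) + T (f(r := \<Sum>a\<in>A. g a))" by (rule ml_add_upd[OF ml r])
  also have "\<dots> = T (f(r := g a)) + (\<Sum>a\<in>A. T (f(r := g a)))" using insert.IH by (simp only:)
  also have "\<dots> = (\<Sum>a\<in>insert a A. T (f(r := g a)))" using insert.hyps by simp
  finally show ?case .
qed

definition Emat :: "'n \<Rightarrow> 'n \<Rightarrow> complex^'n^'n" where
  "Emat i j = (\<chi> a b. if a = i \<and> b = j then 1 else 0)"

lemma mat_decomp: "(M::complex^'n^'n) = (\<Sum>i\<in>UNIV. \<Sum>j\<in>UNIV. cmscale (M $ i $ j) (Emat i j))"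
proof -
  have "(\<Sum>i\<in>UNIV. \<Sum>j\<in>UNIV. cmscale (M $ i $ j) (Emat i j)) $ a $ b = M $ a $ b" for a b
  proof -
    have "(\<Sum>i\<in>UNIV. \<Sum>j\<in>UNIV. cmscale (M $ i $ j) (Emat i j)) $ a $ b
        = (\<Sum>i\<in>UNIV. \<Sum>j\<in>UNIV. M $ i $ j * (if a = i \<and> b = j then 1 else 0))"
      by (simp add: cmscale_def Emat_def)
    also have "\<dots> = (\<Sum>i\<in>UNIV. if a = i then M $ i $ b else 0)"
    proof (rule sum.cong[OF refl])
      fix i show "(\<Sum>j\<in>UNIV. M $ i $ j * (if a = i \<and> b = j then 1 else 0)) = (if a = i then M $ i $ b else 0)"
        by (cases "a = i") (auto simp: if_distrib[of "\<lambda>x. _ * x"] cong: if_cong)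
    qed
    also have "\<dots> = M $ a $ b" by simp
    finally show ?thesis .
  qed
  then show ?thesis by (simp add: vec_eq_iff)
qed

lemma T_expand_slot:
  assumes ml: "multilin cmscale k T" and r: "r < k"
  shows "T (f(r := M)) = (\<Sum>i\<in>UNIV. \<Sum>j\<in>UNIV. M $ i $ j * T (f(r := Emat i j)))"
proof -
  have "T (f(r := M)) = T (f(r := \<Sum>i\<in>UNIV. \<Sum>j\<in>UNIV. cmscale (M $ i $ j) (Emat i j)))"
    using mat_decomp[of M] by simp
  also have "\<dots> = (\<Sum>i\<in>UNIV. T (f(r := \<Sum>j\<in>UNIV. cmscale (M $ i $ j) (Emat i j))))"
    by (rule ml_sum[OF ml r]) simp
  also have "\<dots> = (\<Sum>i\<in>UNIV. \<Sum>j\<in>UNIV. T (f(r := cmscale (M $ i $ j) (Emat i j))))"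
    by (intro sum.cong refl ml_sum[OF ml r]) simp
  also have "\<dots> = (\<Sum>i\<in>UNIV. \<Sum>j\<in>UNIV. M $ i $ j * T (f(r := Emat i j)))"
    by (intro sum.cong refl) (rule ml_scale_upd[OF ml r])
  finally show ?thesis by (simp add: fun_upd_def)
qed

lemma T_hol_gen:
  fixes C :: "nat \<Rightarrow> complex^'n \<Rightarrow> complex^'n^'n"
  assumes ml: "multilin cmscale k T" and C: "\<And>r. r < k \<Longrightarrow> holM U (C r)"
  shows "m \<le> k \<Longrightarrow> hol_fun U (\<lambda>x. T (\<lambda>r. if r < m then C r x else D r))"
proof (induction m arbitrary: D)
  case 0
  then show ?case by (simp add: hol_fun_const)
next
  case (Suc m)
  have m: "m < k" using Suc by simp
  have eq: "T (\<lambda>r. if r < Suc m then C r x else D r) =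
     (\<Sum>i\<in>UNIV. \<Sum>j\<in>UNIV. C m x $ i $ j * T (\<lambda>r. if r < m then C r x else (D(m := Emat i j)) r))" for x
  proof -
    have f: "(\<lambda>r. if r < Suc m then C r x else D r) = (\<lambda>r. if r < m then C r x else D r)(m := C m x)"
      by (auto simp: fun_eq_iff)
    have g: "(\<lambda>r. if r < m then C r x else D r)(m := Emat i j) = (\<lambda>r. if r < m then C r x else (D(m := Emat i j)) r)" for i j
      by (auto simp: fun_eq_iff)
    show ?thesis unfolding f T_expand_slot[OF ml m] g ..
  qed
  show ?case unfolding eq
    using Suc m C[OF m]
    by (intro hol_fun_sum hol_fun_mult) (auto simp: holM_def)
qed

lemma T_hol:
  fixes C :: "nat \<Rightarrow> complex^'n \<Rightarrow> complex^'n^'n"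
  assumes ml: "multilin cmscale k T" and C: "\<And>r. r < k \<Longrightarrow> holM U (C r)"
  shows "hol_fun U (\<lambda>x. T (\<lambda>r. C r x))"
proof -
  have "hol_fun U (\<lambda>x. T (\<lambda>r. if r < k then C r x else 0))"
    by (rule T_hol_gen[OF ml C]) auto
  moreover have "(\<lambda>x. T (\<lambda>r. if r < k then C r x else 0)) = (\<lambda>x. T (\<lambda>r. C r x))"
    by (rule ext, rule multilin_cong[OF ml]) auto
  ultimately show ?thesis by simp
qed

definition wedgeT :: "((nat \<Rightarrow> complex^'n^'n) \<Rightarrow> complex) \<Rightarrow> nat \<Rightarrow> (nat \<Rightarrow> complex^'n \<Rightarrow> complex^'n^'n)
    \<Rightarrow> (nat \<Rightarrow> complex^'n) \<Rightarrow> complex" where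
  "wedgeT T k G v = (\<Sum>p | p permutes {..<k}. of_int (sign p) * T (\<lambda>r. G r (v (p r))))"

lemma perm_upd_fun:
  assumes p: "p permutes {..<k}" and r0: "r0 < k"
  shows "(\<lambda>r. G r ((v(r0 := a)) (p r))) = (\<lambda>r. G r (v (p r)))(inv p r0 := G (inv p r0) a)"
    "inv p r0 < k"
proof -
  have pi: "p (inv p r0) = r0" using permutes_inverses(1)[OF p] by simp
  have "p r = r0 \<longleftrightarrow> r = inv p r0" for r
    using permutes_inverses[OF p] by metis
  then show "(\<lambda>r. G r ((v(r0 := a)) (p r))) = (\<lambda>r. G r (v (p r)))(inv p r0 := G (inv p r0) a)"
    by (auto simp: fun_eq_iff)
  show "inv p r0 < k" using permutes_in_image[OF permutes_inv[OF p]] r0 by simp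
qed

lemma wedge_multilin:
  fixes G :: "nat \<Rightarrow> complex^'n \<Rightarrow> complex^'n^'n"
  assumes ml: "multilin cmscale k T"
    and add: "\<And>r a b. r < k \<Longrightarrow> G r (a + b) = G r a + G r b"
    and scl: "\<And>r c a. r < k \<Longrightarrow> G r (cvscale c a) = cmscale c (G r a)"
  shows "multilin cvscale k (wedgeT T k G)"
  unfolding multilin_def
proof (intro conjI allI impI)
  fix r0 v a b assume r0: "r0 < k"
  have "T (\<lambda>r. G r ((v(r0 := a + b)) (p r))) = T (\<lambda>r. G r ((v(r0 := a)) (p r))) + T (\<lambda>r. G r ((v(r0 := b)) (p r)))"
    if p: "p permutes {..<k}" for p
    unfolding perm_upd_fun[OF p r0] add[OF perm_upd_fun(2)[OF p r0]]
    by (rule ml_add_upd[OF ml perm_upd_fun(2)[OF p r0]])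
  then show "wedgeT T k G (v(r0 := a + b)) = wedgeT T k G (v(r0 := a)) + wedgeT T k G (v(r0 := b))"
    unfolding wedgeT_def by (simp add: sum.distrib[symmetric] distrib_left)
next
  fix r0 v a c assume r0: "r0 < k"
  have "T (\<lambda>r. G r ((v(r0 := cvscale c a)) (p r))) = c * T (\<lambda>r. G r ((v(r0 := a)) (p r)))"
    if p: "p permutes {..<k}" for p
    unfolding perm_upd_fun[OF p r0] scl[OF perm_upd_fun(2)[OF p r0]]
    by (rule ml_scale_upd[OF ml perm_upd_fun(2)[OF p r0]])
  then show "wedgeT T k G (v(r0 := cvscale c a)) = c * wedgeT T k G (v(r0 := a))"
    unfolding wedgeT_def by (simp add: sum_distrib_left mult_ac)
next
  fix v w :: "nat \<Rightarrow> complex^'n" assume vw: "\<forall>r<k. v r = w r"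
  have "T (\<lambda>r. G r (v (p r))) = T (\<lambda>r. G r (w (p r)))" if p: "p permutes {..<k}" for p
    by (rule multilin_cong[OF ml]) (use vw permutes_in_image[OF p] in auto)
  then show "wedgeT T k G v = wedgeT T k G w"
    unfolding wedgeT_def by (intro sum.cong) auto
qed

lemma wedge_alt:
  fixes G :: "nat \<Rightarrow> complex^'n \<Rightarrow> complex^'n^'n"
  shows "alternating k (wedgeT T k G)"
  unfolding alternating_def
proof (intro allI impI)
  fix v :: "nat \<Rightarrow> complex^'n" and r s assume h: "r < k \<and> s < k \<and> r \<noteq> s \<and> v r = v s"
  define t where "t = Transposition.transpose r s"
  have t: "t permutes {..<k}" unfolding t_def using h by (intro permutes_swap_id) auto
  have vt: "v (t i) = v i" for i using h by (auto simp: t_def Transposition.transpose_def)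
  define P where "P = {p. p permutes {..<k}}"
  have fin: "finite P" unfolding P_def by (rule finite_permutations) simp
  have bij: "bij_betw (\<lambda>p. t \<circ> p) P P"
  proof (rule bij_betw_byWitness[where f'="\<lambda>p. t \<circ> p"])
    show "\<forall>p\<in>P. t \<circ> (t \<circ> p) = p" by (auto simp: t_def o_assoc[symmetric] fun_eq_iff)
    show "\<forall>p\<in>P. t \<circ> (t \<circ> p) = p" by (auto simp: t_def fun_eq_iff)
    show "(\<lambda>p. t \<circ> p) ` P \<subseteq> P" "(\<lambda>p. t \<circ> p) ` P \<subseteq> P"
      using permutes_compose[OF _ t] unfolding P_def by auto
  qed
  have sgn: "sign (t \<circ> p) = - sign p" if "p \<in> P" for p
  proof -
    have "permutation p" using that fin unfolding P_def by (auto intro: permutes_imp_permutation)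
    moreover have "permutation t" using t by (auto intro: permutes_imp_permutation)
    ultimately show ?thesis using sign_compose[of t p] h by (simp add: t_def sign_swap_id)
  qed
  define W where "W = wedgeT T k G v"
  have "W = (\<Sum>p\<in>P. of_int (sign (t \<circ> p)) * T (\<lambda>r. G r (v ((t \<circ> p) r))))"
    unfolding W_def wedgeT_def P_def[symmetric]
    using sum.reindex_bij_betw[OF bij, of "\<lambda>p. of_int (sign p) * T (\<lambda>r. G r (v (p r)))"] by simp
  also have "\<dots> = (\<Sum>p\<in>P. - (of_int (sign p) * T (\<lambda>r. G r (v (p r)))))"
    by (intro sum.cong refl) (simp add: sgn vt)
  also have "\<dots> = - W" unfolding W_def wedgeT_def P_def by (simp add: sum_negf)
  finally show "wedgeT T k G v = 0" unfolding W_def by simp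
qed

definition skipidx :: "nat \<Rightarrow> nat \<Rightarrow> nat" where
  "skipidx j r = (if r < j then r else Suc r)"

lemma telescope:
  fixes T :: "(nat \<Rightarrow> complex^'n^'n) \<Rightarrow> complex" and g :: "nat \<Rightarrow> nat \<Rightarrow> complex^'n^'n"
  assumes ml: "multilin cmscale k T"
  shows "(\<Sum>j<Suc (Suc k). (-1)^j * T (\<lambda>r. g (skipidx j r) r - g (skipidx j (Suc r)) r)) = 0"
proof -
  define a where "a = (\<lambda>i r. g i r - g (Suc i) r)"
  define S where "S = (\<lambda>i. T (\<lambda>r. if r < i then a r r else a (Suc r) r))"
  define F where "F = (\<lambda>j. T (\<lambda>r. g (skipidx j r) r - g (skipidx j (Suc r)) r))"
  have face: "F j = (if j \<le> k then S j else 0) + (if 0 < j then S (j - 1) else 0)" if j: "j < Suc (Suc k)" for j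
  proof (cases j)
    case 0
    then show ?thesis by (simp add: F_def S_def a_def skipidx_def)
  next
    case (Suc j')
    show ?thesis
    proof (cases "j' = k")
      case True
      have "F j = S k"
        unfolding F_def S_def
        by (rule multilin_cong[OF ml]) (simp add: Suc True a_def skipidx_def)
      then show ?thesis using Suc True by simp
    next
      case False
      then have j': "j' < k" using j Suc by simp
      define f where "f = (\<lambda>r. g (skipidx j r) r - g (skipidx j (Suc r)) r)"
      have fj: "f j' = a j' j' + a (Suc j') j'" by (simp add: f_def a_def skipidx_def Suc)
      have e1: "f(j' := a j' j') = (\<lambda>r. if r < j then a r r else a (Suc r) r)"
        by (auto simp: fun_eq_iff f_def a_def skipidx_def Suc)
      have e2: "f(j' := a (Suc j') j') = (\<lambda>r. if r < j' then a r r else a (Suc r) r)"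
        by (auto simp: fun_eq_iff f_def a_def skipidx_def Suc)
      have "F j = S j + S j'"
        unfolding F_def S_def f_def[symmetric] ml_add'[OF ml j', of f, OF fj] e1 e2 ..
      then show ?thesis using Suc j' by simp
    qed
  qed
  have "(\<Sum>j<Suc (Suc k). (-1)^j * F j)
     = (\<Sum>j<Suc (Suc k). (-1)^j * (if j \<le> k then S j else 0)) + (\<Sum>j<Suc (Suc k). (-1)^j * (if 0 < j then S (j - 1) else 0))"
    by (simp add: face distrib_left sum.distrib)
  also have "(\<Sum>j<Suc (Suc k). (-1)^j * (if j \<le> k then S j else 0)) = (\<Sum>j<Suc k. (-1)^j * S j)"
    by (simp add: less_Suc_eq_le)
  also have "(\<Sum>j<Suc (Suc k). (-1)^j * (if 0 < j then S (j - 1) else 0)) = - (\<Sum>j<Suc k. (-1)^j * S j)"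
    by (subst sum.lessThan_Suc_shift) (simp add: sum_negf)
  finally show ?thesis unfolding F_def by simp
qed

lemma kcells_facts:
  assumes "c \<in> kcells k m"
  shows "finite c" "length (sorted_list_of_set c) = Suc k" "set (sorted_list_of_set c) = c"
    "\<And>i. i < Suc k \<Longrightarrow> sorted_list_of_set c ! i \<le> m"
    "\<And>i. i < Suc k \<Longrightarrow> sorted_list_of_set c ! i \<in> c"
proof -
  have c: "c \<subseteq> {0..m}" "card c = Suc k" using assms by (auto simp: kcells_def)
  show fin: "finite c" using c(2) card.infinite by fastforce
  show len: "length (sorted_list_of_set c) = Suc k" using c(2) by simp
  show st: "set (sorted_list_of_set c) = c" using fin by simp
  show "\<And>i. i < Suc k \<Longrightarrow> sorted_list_of_set c ! i \<in> c"
    using st len nth_mem by metis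
  then show "\<And>i. i < Suc k \<Longrightarrow> sorted_list_of_set c ! i \<le> m" using c(1) by fastforce
qed

lemma face_facts:
  assumes d: "d \<in> kcells (Suc k) m" and j: "j < Suc (Suc k)"
  defines "ds \<equiv> sorted_list_of_set d"
  shows "d - {ds ! j} \<in> kcells k m"
    "\<And>r. r < Suc k \<Longrightarrow> sorted_list_of_set (d - {ds ! j}) ! r = ds ! skipidx j r"
proof -
  note kf = kcells_facts[OF d]
  have dist: "distinct ds" unfolding ds_def by simp
  have len: "length ds = Suc (Suc k)" unfolding ds_def using kf(2) .
  have mem: "ds ! j \<in> d" using kf(5)[OF j] unfolding ds_def .
  show "d - {ds ! j} \<in> kcells k m"
    using d mem kf(1) by (auto simp: kcells_def)
  have split: "ds = take j ds @ ds ! j # drop (Suc j) ds" by (rule id_take_nth_drop) (use j len in simp)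
  have nin: "ds ! j \<notin> set (take j ds)"
  proof
    assume "ds ! j \<in> set (take j ds)"
    then obtain i where i: "i < length (take j ds)" "take j ds ! i = ds ! j" by (auto simp: in_set_conv_nth)
    then have "i < j" "ds ! i = ds ! j" by auto
    then show False using dist j len unfolding distinct_conv_nth by (metis less_trans nat_neq_iff)
  qed
  have "sorted_list_of_set (d - {ds ! j}) = remove1 (ds ! j) ds"
    unfolding ds_def using kf(1) by (rule sorted_list_of_set_remove)
  also have "\<dots> = take j ds @ drop (Suc j) ds"
    by (subst split) (simp add: remove1_append nin)
  finally have L: "sorted_list_of_set (d - {ds ! j}) = take j ds @ drop (Suc j) ds" .
  fix r assume r: "r < Suc k"
  show "sorted_list_of_set (d - {ds ! j}) ! r = ds ! skipidx j r"
    unfolding L skipidx_def using r j len by (auto simp: nth_append min_def)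
qed

lemma Cf_KF:
  fixes T :: "(nat \<Rightarrow> complex^'n^'n) \<Rightarrow> complex" and \<rho> :: "nat \<Rightarrow> complex^'n \<Rightarrow> complex^'n"
  assumes ml: "multilin cmscale k T" and gl: "gl_invariant k T"
    and cs: "chart_simplex U m \<rho>" and c: "c \<in> kcells k m" and x: "x \<in> U"
  shows "Cf T k U \<rho> c x v = (\<Sum>p | p permutes {..<k}. of_int (sign p) *
     T (\<lambda>r. bet (\<rho> (sorted_list_of_set c ! r)) x (v (p r)) - bet (\<rho> (sorted_list_of_set c ! Suc r)) x (v (p r))))"
proof -
  note kf = kcells_facts[OF c]
  have ch: "chart U (map \<rho> (sorted_list_of_set c) ! i)" if "i \<le> k" for i
    using that kf(2,4) cs unfolding chart_simplex_def by auto
  have "Cf T k U \<rho> c x v = (\<Sum>p | p permutes {..<k}. of_int (sign p) *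
     T (\<lambda>r. bet (map \<rho> (sorted_list_of_set c) ! r) x (v (p r)) - bet (map \<rho> (sorted_list_of_set c) ! Suc r) x (v (p r))))"
    unfolding Cf_def by (rule KF[OF ml gl _ ch x]) (use kf(2) in auto)
  also have "\<dots> = (\<Sum>p | p permutes {..<k}. of_int (sign p) *
     T (\<lambda>r. bet (\<rho> (sorted_list_of_set c ! r)) x (v (p r)) - bet (\<rho> (sorted_list_of_set c ! Suc r)) x (v (p r))))"
    by (intro sum.cong refl arg_cong2[where f="(*)"] multilin_cong[OF ml]) (use kf(2) in auto)
  finally show ?thesis .
qed

lemma holM_local:
  assumes "holM U A" "open U" "\<And>x. x \<in> U \<Longrightarrow> A x = B x"
  shows "holM U B"
  unfolding holM_def
proof (intro allI)
  fix i j
  show "hol_fun U (\<lambda>x. B x $ i $ j)"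
    by (rule hol_fun_local[of U "\<lambda>x. A x $ i $ j"]) (use assms in \<open>auto simp: holM_def\<close>)
qed

lemma holM_diff:
  assumes "holM U A" "holM U B"
  shows "holM U (\<lambda>x. A x - B x)"
  using assms unfolding holM_def by (simp add: hol_fun_diff)

lemma matrix_cmscale_right: "(A::complex^'n^'n) ** cmscale c B = cmscale c (A ** B)"
  by (simp add: vec_eq_iff matrix_matrix_mult_def cmscale_def sum_distrib_left mult_ac)

lemma bet_holM:
  fixes \<sigma> :: "complex^'n \<Rightarrow> complex^'n"
  assumes c: "chart U \<sigma>"
  shows "holM U (\<lambda>x. bet \<sigma> x w)"
proof -
  note cf = chart_facts[OF c]
  have hJ: "holM U (jac \<sigma>)" by (rule holM_jac[OF cf(4,2)])
  have hD: "holM U (\<lambda>x. (\<chi> i j. \<Sum>l\<in>UNIV. w $ l * pd (\<lambda>y. jac \<sigma> y $ i $ j) l x) :: complex^'n^'n)"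
    unfolding holM_def using hJ cf(4)
    by (auto intro!: hol_fun_sum hol_fun_scale hol_pd simp: holM_def)
  have "holM U (\<lambda>x. Nj U \<sigma> x ** (\<chi> i j. \<Sum>l\<in>UNIV. w $ l * pd (\<lambda>y. jac \<sigma> y $ i $ j) l x))"
    by (rule holM_mult[OF holM_Nj[OF c] hD])
  then show ?thesis
    by (rule holM_local[OF _ cf(4)])
       (simp add: bet_def chart_jac_inv(3)[OF c] dmat_hol[OF hJ])
qed

lemma bet_linear:
  fixes \<sigma> :: "complex^'n \<Rightarrow> complex^'n"
  assumes c: "chart U \<sigma>" and x: "x \<in> U"
  shows "bet \<sigma> x (a + b) = bet \<sigma> x a + bet \<sigma> x b"
    "bet \<sigma> x (cvscale t a) = cmscale t (bet \<sigma> x a)"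
proof -
  note cf = chart_facts[OF c]
  have hJ: "holM U (jac \<sigma>)" by (rule holM_jac[OF cf(4,2)])
  show "bet \<sigma> x (a + b) = bet \<sigma> x a + bet \<sigma> x b"
    by (simp add: bet_def dmat_linear(2)[OF hJ x] matrix_add_ldistrib)
  show "bet \<sigma> x (cvscale t a) = cmscale t (bet \<sigma> x a)"
    by (simp add: bet_def dmat_linear(1)[OF hJ x] matrix_cmscale_right)
qed

lemma cmscale_diff: "cmscale c (A - B) = cmscale c A - cmscale c (B::complex^'n^'n)"
  by (simp add: cmscale_def vec_eq_iff algebra_simps)

lemma Cf_hol_kform:
  fixes T :: "(nat \<Rightarrow> complex^'n^'n) \<Rightarrow> complex" and \<rho> :: "nat \<Rightarrow> complex^'n \<Rightarrow> complex^'n"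
  assumes ml: "multilin cmscale k T" and gl: "gl_invariant k T" and U: "open U"
    and cs: "chart_simplex U m \<rho>" and c: "c \<in> kcells k m"
  shows "hol_kform k U (Cf T k U \<rho> c)"
proof -
  note kf = kcells_facts[OF c]
  define L where "L = sorted_list_of_set c"
  have ch: "chart U (\<rho> (L ! i))" if "i \<le> k" for i
    using that kf(4) cs unfolding chart_simplex_def L_def by auto
  define G where "G = (\<lambda>x r w. bet (\<rho> (L ! r)) x w - bet (\<rho> (L ! Suc r)) x w)"
  have eqw: "Cf T k U \<rho> c x = wedgeT T k (G x)" if x: "x \<in> U" for x
    by (rule ext) (simp add: Cf_KF[OF ml gl cs c x] wedgeT_def G_def L_def)
  have pw: "multilin cvscale k (Cf T k U \<rho> c x) \<and> alternating k (Cf T k U \<rho> c x)" if x: "x \<in> U" for x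
  proof -
    have "multilin cvscale k (wedgeT T k (G x))"
    proof (rule wedge_multilin[OF ml])
      fix r a b assume r: "r < k"
      show "G x r (a + b) = G x r a + G x r b"
        using bet_linear(1)[OF ch[of r] x] bet_linear(1)[OF ch[of "Suc r"] x] r by (simp add: G_def)
    next
      fix r t a assume r: "r < k"
      show "G x r (cvscale t a) = cmscale t (G x r a)"
        using bet_linear(2)[OF ch[of r] x] bet_linear(2)[OF ch[of "Suc r"] x] r by (simp add: G_def cmscale_diff)
    qed
    then show ?thesis using wedge_alt eqw[OF x] by simp
  qed
  have hol: "hol_fun U (\<lambda>x. Cf T k U \<rho> c x (\<lambda>i. axis (js i) 1))" for js
  proof -
    have "hol_fun U (\<lambda>x. \<Sum>p | p permutes {..<k}. of_int (sign p) * T (\<lambda>r. G x r (axis (js (p r)) 1)))"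
    proof (intro hol_fun_sum hol_fun_scale T_hol[OF ml])
      fix p r assume r: "r < k"
      show "holM U (\<lambda>x. G x r (axis (js (p r)) 1))"
        unfolding G_def using r by (intro holM_diff bet_holM ch) auto
    qed (simp add: finite_permutations)
    then show ?thesis
      by (rule hol_fun_local[OF _ U]) (simp add: eqw wedgeT_def)
  qed
  show ?thesis unfolding hol_kform_def using pw hol by blast
qed

lemma Cf_cocycle:
  fixes T :: "(nat \<Rightarrow> complex^'n^'n) \<Rightarrow> complex" and \<rho> :: "nat \<Rightarrow> complex^'n \<Rightarrow> complex^'n"
  assumes ml: "multilin cmscale k T" and gl: "gl_invariant k T"
    and cs: "chart_simplex U m \<rho>" and d: "d \<in> kcells (Suc k) m" and x: "x \<in> U"
  shows "(\<Sum>j<Suc (Suc k). (-1)^j * Cf T k U \<rho> (d - {sorted_list_of_set d ! j}) x v) = 0"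
proof -
  define ds where "ds = sorted_list_of_set d"
  define g where "g = (\<lambda>(p::nat \<Rightarrow> nat) i (r::nat). bet (\<rho> (ds ! i)) x (v (p r)))"
  define X where "X = (\<lambda>j p. T (\<lambda>r. g p (skipidx j r) r - g p (skipidx j (Suc r)) r))"
  define P where "P = {p. p permutes {..<k}}"
  have face: "Cf T k U \<rho> (d - {ds ! j}) x v = (\<Sum>p\<in>P. of_int (sign p) * X j p)" if j: "j < Suc (Suc k)" for j
  proof -
    note ff = face_facts[OF d j]
    show ?thesis
      unfolding Cf_KF[OF ml gl cs ff(1)[folded ds_def] x] P_def
      by (intro sum.cong refl arg_cong2[where f="(*)"])
         (unfold X_def g_def, rule multilin_cong[OF ml], simp add: ff(2)[folded ds_def])
  qed
  have "(\<Sum>j<Suc (Suc k). (-1)^j * Cf T k U \<rho> (d - {ds ! j}) x v)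
      = (\<Sum>j<Suc (Suc k). \<Sum>p\<in>P. (-1)^j * (of_int (sign p) * X j p))"
    by (simp add: face sum_distrib_left)
  also have "\<dots> = (\<Sum>p\<in>P. \<Sum>j<Suc (Suc k). (-1)^j * (of_int (sign p) * X j p))"
    by (rule sum.swap)
  also have "\<dots> = (\<Sum>p\<in>P. of_int (sign p) * (\<Sum>j<Suc (Suc k). (-1)^j * X j p))"
    by (intro sum.cong refl) (simp only: sum_distrib_left mult.left_commute)
  also have "\<dots> = 0"
    using telescope[OF ml] by (simp add: X_def)
  finally show ?thesis unfolding ds_def .
qed

lemma Cf_degen:
  fixes T :: "(nat \<Rightarrow> complex^'n^'n) \<Rightarrow> complex" and \<rho> :: "nat \<Rightarrow> complex^'n \<Rightarrow> complex^'n"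
  assumes ml: "multilin cmscale k T" and gl: "gl_invariant k T"
    and cs: "chart_simplex U m \<rho>" and \<alpha>m: "\<forall>i\<le>m'. \<alpha> i \<le> m" and mono: "mono_on {0..m'} \<alpha>"
    and c: "c \<in> kcells k m'" and x: "x \<in> U"
  shows "Cf T k U (\<rho> \<circ> \<alpha>) c x v = omega_act \<alpha> (Cf T k U \<rho>) c x v"
proof -
  note kf = kcells_facts[OF c]
  define L where "L = sorted_list_of_set c"
  have cm: "c \<subseteq> {0..m'}" using c by (auto simp: kcells_def)
  have sL: "sorted_wrt (<) L" unfolding L_def by simp
  have setL: "set L = c" and lenL: "length L = Suc k" using kf unfolding L_def by auto
  have cs': "chart_simplex U m' (\<rho> \<circ> \<alpha>)" using cs \<alpha>m unfolding chart_simplex_def by auto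
  show ?thesis
  proof (cases "inj_on \<alpha> c")
    case True
    have "sorted_list_of_set (\<alpha> ` c) = map \<alpha> L"
    proof -
      have "sorted_wrt (\<lambda>a b. \<alpha> a < \<alpha> b) L"
      proof (rule sorted_wrt_mono_rel[OF _ sL])
        fix a b assume ab: "a \<in> set L" "b \<in> set L" "a < b"
        then have ac: "a \<in> c" "b \<in> c" using setL by auto
        then have "a \<in> {0..m'}" "b \<in> {0..m'}" using cm by auto
        then have le: "\<alpha> a \<le> \<alpha> b" using mono ab(3) by (simp add: mono_onD)
        have "\<alpha> a \<noteq> \<alpha> b"
        proof
          assume "\<alpha> a = \<alpha> b"
          then have "a = b" using inj_onD[OF True _ ac] by blast
          then show False using ab(3) by simp
        qed
        then show "\<alpha> a < \<alpha> b" using le by simp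
      qed
      then have "sorted_wrt (<) (map \<alpha> L)" by (simp add: sorted_wrt_map)
      moreover have "set (map \<alpha> L) = \<alpha> ` c" using setL by simp
      moreover have "length (map \<alpha> L) = card (\<alpha> ` c)"
        using lenL card_image[OF True] kf(1) c by (simp add: kcells_def)
      ultimately show ?thesis using sorted_list_of_set_unique[of "\<alpha> ` c" "map \<alpha> L"] kf(1) by simp
    qed
    then show ?thesis
      unfolding omega_act_def Cf_def using True by (simp add: L_def)
  next
    case False
    have "\<exists>i<k. \<alpha> (L ! i) = \<alpha> (L ! Suc i)"
    proof (rule ccontr)
      assume "\<not> ?thesis"
      then have ne: "\<And>i. i < k \<Longrightarrow> \<alpha> (L ! i) \<noteq> \<alpha> (L ! Suc i)" by blast
      have "\<alpha> (L ! i) < \<alpha> (L ! Suc i)" if i: "i < k" for i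
      proof -
        have "L ! i < L ! Suc i" using sL i lenL by (simp add: sorted_wrt_iff_nth_less)
        moreover have "L ! i \<in> {0..m'}" "L ! Suc i \<in> {0..m'}"
          using i lenL setL cm nth_mem[of i L] nth_mem[of "Suc i" L] by auto
        ultimately have "\<alpha> (L ! i) \<le> \<alpha> (L ! Suc i)" using mono by (simp add: mono_onD)
        then show ?thesis using ne[OF i] by simp
      qed
      then have "sorted_wrt (<) (map \<alpha> L)"
        by (subst sorted_wrt_iff_nth_Suc_transp) (auto simp: transp_def lenL)
      then have "distinct (map \<alpha> L)" using strict_sorted_iff by blast
      then have "inj_on \<alpha> c" using setL by (simp add: distinct_map)
      then show False using False by simp
    qed
    then obtain i where i: "i < k" "\<alpha> (L ! i) = \<alpha> (L ! Suc i)" by blast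
    have "Cf T k U (\<rho> \<circ> \<alpha>) c x v = 0"
      unfolding Cf_KF[OF ml gl cs' c x]
      by (intro sum.neutral ballI) (simp add: ml_zero[OF ml i(1)] i(2)[unfolded L_def])
    then show ?thesis unfolding omega_act_def using False by simp
  qed
qed

lemma theta_local:
  assumes S: "open S" and z: "z \<in> S" and eq: "\<And>y. y \<in> S \<Longrightarrow> G y = G' y"
  shows "theta G z w = theta G' z w"
proof -
  have j: "jac G y = jac G' y" if "y \<in> S" for y by (rule jac_local[OF S that eq])
  have "dmat (jac G) z w = dmat (jac G') z w" by (rule dmat_local[OF S z j])
  then show ?thesis unfolding theta_def using j[OF z] by simp
qed

lemma emb_facts:
  fixes \<phi> \<sigma> :: "complex^'n \<Rightarrow> complex^'n"
  assumes e: "hol_embed U' U \<phi>" and c: "chart U \<sigma>"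
  shows "open ((\<sigma> \<circ> \<phi>) ` U')"
    "\<And>x'. x' \<in> U' \<Longrightarrow> inv_into U' (\<sigma> \<circ> \<phi>) ((\<sigma> \<circ> \<phi>) x') = x'"
    "\<And>x'. x' \<in> U' \<Longrightarrow> inv_into U \<sigma> ((\<sigma> \<circ> \<phi>) x') = \<phi> x'"
proof -
  note cf = chart_facts[OF c]
  have b: "biholo U' \<phi>" and sub: "\<phi> ` U' \<subseteq> U" using e unfolding hol_embed_def by auto
  have injs: "inj_on \<sigma> U" using c unfolding chart_def biholo_def by auto
  have injp: "inj_on \<phi> U'" and op: "open (\<phi> ` U')" using b unfolding biholo_def by auto
  have "(\<sigma> \<circ> \<phi>) ` U' = \<sigma> ` U \<inter> inv_into U \<sigma> -` (\<phi> ` U')"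
  proof
    show "(\<sigma> \<circ> \<phi>) ` U' \<subseteq> \<sigma> ` U \<inter> inv_into U \<sigma> -` (\<phi> ` U')"
      using sub cf(5) by auto
    show "\<sigma> ` U \<inter> inv_into U \<sigma> -` (\<phi> ` U') \<subseteq> (\<sigma> \<circ> \<phi>) ` U'"
    proof
      fix y assume y: "y \<in> \<sigma> ` U \<inter> inv_into U \<sigma> -` (\<phi> ` U')"
      then obtain x' where x': "x' \<in> U'" "inv_into U \<sigma> y = \<phi> x'" by auto
      then have "y = \<sigma> (\<phi> x')" using cf(6) y by (metis IntD1)
      then show "y \<in> (\<sigma> \<circ> \<phi>) ` U'" using x' by auto
    qed
  qed
  moreover have "open (\<sigma> ` U \<inter> inv_into U \<sigma> -` (\<phi> ` U'))"
    by (rule continuous_open_preimage[OF hol_map_cont[OF cf(3)] cf(1) op])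
  ultimately show "open ((\<sigma> \<circ> \<phi>) ` U')" by simp
  have inj: "inj_on (\<sigma> \<circ> \<phi>) U'"
    using comp_inj_on[OF injp inj_on_subset[OF injs sub]] .
  show "\<And>x'. x' \<in> U' \<Longrightarrow> inv_into U' (\<sigma> \<circ> \<phi>) ((\<sigma> \<circ> \<phi>) x') = x'"
    by (rule inv_into_f_f[OF inj])
  show "\<And>x'. x' \<in> U' \<Longrightarrow> inv_into U \<sigma> ((\<sigma> \<circ> \<phi>) x') = \<phi> x'"
    using injs sub by (auto simp: inv_into_f_f)
qed

lemma trans_local:
  fixes \<phi> \<sigma>p \<sigma>q :: "complex^'n \<Rightarrow> complex^'n"
  assumes e: "hol_embed U' U \<phi>" and cq: "chart U \<sigma>q"
  shows "\<And>y. y \<in> (\<sigma>q \<circ> \<phi>) ` U' \<Longrightarrow> ((\<sigma>p \<circ> \<phi>) \<circ> inv_into U' (\<sigma>q \<circ> \<phi>)) y = (\<sigma>p \<circ> inv_into U \<sigma>q) y"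
  using emb_facts(2,3)[OF e cq] by auto

lemma Cf_natural:
  fixes T :: "(nat \<Rightarrow> complex^'n^'n) \<Rightarrow> complex" and \<rho> :: "nat \<Rightarrow> complex^'n \<Rightarrow> complex^'n"
  assumes ml: "multilin cmscale k T" and e: "hol_embed U' U \<phi>"
    and cs: "chart_simplex U m \<rho>" and c: "c \<in> kcells k m" and x: "x \<in> U'"
  shows "Cf T k U' (\<lambda>j. \<rho> j \<circ> \<phi>) c x v = pullk \<phi> (Cf T k U \<rho> c) x v"
proof -
  note kf = kcells_facts[OF c]
  define L where "L = sorted_list_of_set c"
  have lenL: "length L = Suc k" using kf unfolding L_def by simp
  define \<sigma> where "\<sigma> = (\<lambda>i. \<rho> (L ! i))"
  have ch: "chart U (\<sigma> i)" if "i \<le> k" for i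
    using that kf(4) cs unfolding chart_simplex_def \<sigma>_def L_def by auto
  have b: "biholo U' \<phi>" and sub: "\<phi> ` U' \<subseteq> U" using e unfolding hol_embed_def by auto
  have hp: "hol_map U' \<phi>" using b unfolding biholo_def by auto
  have phx: "\<phi> x \<in> U" using sub x by auto
  have m1: "map \<rho> L ! i = \<sigma> i" if "i \<le> k" for i using that lenL by (simp add: \<sigma>_def)
  have m2: "map (\<lambda>j. \<rho> j \<circ> \<phi>) L ! i = \<sigma> i \<circ> \<phi>" if "i \<le> k" for i using that lenL by (simp add: \<sigma>_def)
  have jk: "jac (\<sigma> k \<circ> \<phi>) x = jac (\<sigma> k) (\<phi> x) ** jac \<phi> x"
    using hol_map_comp(2)[OF chart_facts(2)[OF ch[of k]] hp _ x] sub by (auto simp: o_def)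
  define y where "y = \<sigma> k (\<phi> x)"
  have yV: "y \<in> (\<sigma> k \<circ> \<phi>) ` U'" using x by (simp add: y_def)
  have key: "sharp ((\<sigma> s \<circ> \<phi>) \<circ> inv_into U' (\<sigma> k \<circ> \<phi>)) (theta ((\<sigma> (s - 1) \<circ> \<phi>) \<circ> inv_into U' (\<sigma> s \<circ> \<phi>))) y w
           = sharp (\<sigma> s \<circ> inv_into U (\<sigma> k)) (theta (\<sigma> (s - 1) \<circ> inv_into U (\<sigma> s))) y w"
    if s: "1 \<le> s" "s \<le> k" for s w
  proof -
    have o1: "open ((\<sigma> k \<circ> \<phi>) ` U')" by (rule emb_facts(1)[OF e ch[of k]]) simp
    have o2: "open ((\<sigma> s \<circ> \<phi>) ` U')" by (rule emb_facts(1)[OF e ch[of s]]) (use s in simp)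
    have tk: "\<And>y. y \<in> (\<sigma> k \<circ> \<phi>) ` U' \<Longrightarrow> ((\<sigma> s \<circ> \<phi>) \<circ> inv_into U' (\<sigma> k \<circ> \<phi>)) y = (\<sigma> s \<circ> inv_into U (\<sigma> k)) y"
      by (rule trans_local[OF e ch[of k]]) simp
    have ts: "\<And>y. y \<in> (\<sigma> s \<circ> \<phi>) ` U' \<Longrightarrow> ((\<sigma> (s - 1) \<circ> \<phi>) \<circ> inv_into U' (\<sigma> s \<circ> \<phi>)) y = (\<sigma> (s - 1) \<circ> inv_into U (\<sigma> s)) y"
      by (rule trans_local[OF e ch[of s]]) (use s in simp)
    have J: "jac ((\<sigma> s \<circ> \<phi>) \<circ> inv_into U' (\<sigma> k \<circ> \<phi>)) y = jac (\<sigma> s \<circ> inv_into U (\<sigma> k)) y"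
      by (rule jac_local[OF o1 yV tk])
    have F: "((\<sigma> s \<circ> \<phi>) \<circ> inv_into U' (\<sigma> k \<circ> \<phi>)) y = (\<sigma> s \<circ> inv_into U (\<sigma> k)) y"
      by (rule tk[OF yV])
    have Fy: "(\<sigma> s \<circ> inv_into U (\<sigma> k)) y = (\<sigma> s \<circ> \<phi>) x"
      using emb_facts(3)[OF e ch[of k] x] s by (simp add: y_def)
    have zV: "(\<sigma> s \<circ> inv_into U (\<sigma> k)) y \<in> (\<sigma> s \<circ> \<phi>) ` U'" using Fy x by auto
    have "theta ((\<sigma> (s - 1) \<circ> \<phi>) \<circ> inv_into U' (\<sigma> s \<circ> \<phi>)) ((\<sigma> s \<circ> inv_into U (\<sigma> k)) y) w'
        = theta (\<sigma> (s - 1) \<circ> inv_into U (\<sigma> s)) ((\<sigma> s \<circ> inv_into U (\<sigma> k)) y) w'" for w'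
      by (rule theta_local[OF o2 zV ts])
    then show ?thesis unfolding sharp_def J F by simp
  qed
  have key': "sharp ((\<sigma> (Suc r) \<circ> \<phi>) \<circ> inv_into U' (\<sigma> k \<circ> \<phi>)) (theta ((\<sigma> r \<circ> \<phi>) \<circ> inv_into U' (\<sigma> (Suc r) \<circ> \<phi>))) y w
           = sharp (\<sigma> (Suc r) \<circ> inv_into U (\<sigma> k)) (theta (\<sigma> r \<circ> inv_into U (\<sigma> (Suc r)))) y w"
    if "r < k" for r w using key[of "Suc r" w] that by simp
  have "Cf T k U' (\<lambda>j. \<rho> j \<circ> \<phi>) c x v
      = (\<Sum>p | p permutes {..<k}. of_int (sign p) * T (\<lambda>r.
          sharp ((\<sigma> (Suc r) \<circ> \<phi>) \<circ> inv_into U' (\<sigma> k \<circ> \<phi>)) (theta ((\<sigma> (Suc r - 1) \<circ> \<phi>) \<circ> inv_into U' (\<sigma> (Suc r) \<circ> \<phi>)))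
            y (jac (\<sigma> k) (\<phi> x) *v (jac \<phi> x *v v (p r)))))"
    unfolding Cf_def tau_def Let_def pullk_def Twedge_def L_def[symmetric]
    by (intro sum.cong refl arg_cong2[where f="(*)"] multilin_cong[OF ml])
       (simp add: m2 jk y_def matrix_vector_mul_assoc)
  also have "\<dots> = (\<Sum>p | p permutes {..<k}. of_int (sign p) * T (\<lambda>r.
          sharp (\<sigma> (Suc r) \<circ> inv_into U (\<sigma> k)) (theta (\<sigma> (Suc r - 1) \<circ> inv_into U (\<sigma> (Suc r))))
            y (jac (\<sigma> k) (\<phi> x) *v (jac \<phi> x *v v (p r)))))"
    by (intro sum.cong refl arg_cong2[where f="(*)"] multilin_cong[OF ml]) (simp add: key')
  also have "\<dots> = pullk \<phi> (Cf T k U \<rho> c) x v"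
    unfolding Cf_def tau_def Let_def pullk_def Twedge_def L_def[symmetric]
    by (intro sum.cong refl arg_cong2[where f="(*)"] multilin_cong[OF ml])
       (simp add: m1 y_def)
  finally show ?thesis .
qed

theorem proposition5p3:
  fixes T :: "(nat \<Rightarrow> complex^'n^'n) \<Rightarrow> complex" and k :: nat
  assumes "k > 0"
    and "multilin cmscale k T"
    and "gl_invariant k T"
  shows "(\<forall>(U::(complex^'n) set) m \<rho>. stein_open U \<and> chart_simplex U m \<rho> \<longrightarrow>
             omega_simplex k U m (Cf T k U \<rho>))
       \<and> (\<forall>(U::(complex^'n) set) m m' \<alpha> \<rho>.
             stein_open U \<and> chart_simplex U m \<rho> \<and> (\<forall>i\<le>m'. \<alpha> i \<le> m) \<and> mono_on {0..m'} \<alpha> \<longrightarrow>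
             (\<forall>c\<in>kcells k m'. \<forall>x\<in>U. \<forall>v.
                Cf T k U (\<rho> \<circ> \<alpha>) c x v = omega_act \<alpha> (Cf T k U \<rho>) c x v))
       \<and> (\<forall>(U::(complex^'n) set) U' \<phi> m \<rho>.
             stein_open U \<and> stein_open U' \<and> hol_embed U' U \<phi> \<and> chart_simplex U m \<rho> \<longrightarrow>
             (\<forall>c\<in>kcells k m. \<forall>x\<in>U'. \<forall>v.
                Cf T k U' (\<lambda>j. \<rho> j \<circ> \<phi>) c x v = pullk \<phi> (Cf T k U \<rho> c) x v))"
proof (intro conjI allI impI ballI)
  note ml = assms(2) and gl = assms(3)
  fix U :: "(complex^'n) set" and m \<rho>
  assume h: "stein_open U \<and> chart_simplex U m \<rho>"
  then have U: "open U" and cs: "chart_simplex U m \<rho>" by (auto simp: stein_open_def)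
  show "omega_simplex k U m (Cf T k U \<rho>)"
    unfolding omega_simplex_def
    using Cf_hol_kform[OF ml gl U cs] Cf_cocycle[OF ml gl cs] by blast
next
  note ml = assms(2) and gl = assms(3)
  fix U :: "(complex^'n) set" and m m' \<alpha> \<rho> c x v
  assume h: "stein_open U \<and> chart_simplex U m \<rho> \<and> (\<forall>i\<le>m'. \<alpha> i \<le> m) \<and> mono_on {0..m'} \<alpha>"
    and c: "c \<in> kcells k m'" and x: "x \<in> U"
  show "Cf T k U (\<rho> \<circ> \<alpha>) c x v = omega_act \<alpha> (Cf T k U \<rho>) c x v"
    using Cf_degen[OF ml gl _ _ _ c x] h by blast
next
  note ml = assms(2)
  fix U :: "(complex^'n) set" and U' \<phi> m \<rho> c x v
  assume h: "stein_open U \<and> stein_open U' \<and> hol_embed U' U \<phi> \<and> chart_simplex U m \<rho>"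
    and c: "c \<in> kcells k m" and x: "x \<in> U'"
  show "Cf T k U' (\<lambda>j. \<rho> j \<circ> \<phi>) c x v = pullk \<phi> (Cf T k U \<rho> c) x v"
    using Cf_natural[OF ml _ _ c x] h by blast
qed

end
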